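(* For every $l\ge 2$ there exist complex numbers $\alpha^{(l)}_{[i]}$, indexed by words $i$ in $\{0,1\}$ with $1\le w(i)\le l-1$ and last letter $1$, such that each $\alpha^{(l)}_{[i]}$ is a linear combination with integer coefficients of multiple zeta values of weight exactly $l-1-w(i)$ (for weight $0$ this means an integer), and for all $0<x<1$ \[ g_l(x)=\begin{cases} \dfrac{1}{x}\displaystyle\sum_{m=1}^{l-1}\sum_{i\in I_m}\alpha^{(l)}_{[i]}L_{[i]}(x) & l \text{ even},\\[2mm] \displaystyle\sum_{m=1}^{l-1}\sum_{i\in I_m}\alpha^{(l)}_{[i]}L_{[i]}(x) & l\text{ odd}.\end{cases} \]
   Context: Hyperlogarithms: for a word $w=[\sigma_1|\dots|\sigma_n]$ in letters $\sigma_j\in\mathbb{C}$ with $\sigma_n\neq 0$, $L_{[\,]}(z)=1$ and $L_{[\sigma_1|\sigma_2|\dots|\sigma_n]}(z)=\int_0^z \omega_{\sigma_1}(t)L_{[\sigma_2|\dots|\sigma_n]}(t)$ with $\omega_0=dt/t$, $\omega_\sigma=dt/(\sigma-t)$ for $\sigma\ne0$. $w(i)$ is the number of letters of $i$. $I_m$ is the set of words $i=[i_1|\dots|i_m]$ with $i_k\in\{0,1\}$ and $i_m=1$. Multiple zeta values: $\zeta(s_1,\dots,s_r)=\sum_{k_1>\dots>k_r\ge1}\prod_j k_j^{-s_j}$ ($s_j\ge1$ integers, $s_1\ge2$), of weight $s_1+\dots+s_r$. The functions $g_l$ on $(0,1)$ are defined by $g_2(x)=\int_0^1\frac{dt}{1-tx}=\frac{-\log(1-x)}{x}$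 and, for $l\ge2$, $g_{l+1}(x)=\int_0^1 \frac{t x\, g_l(t)}{1-tx}\,dt$ if $l$ is even and $g_{l+1}(x)=\int_0^1\frac{g_l(t)}{1-tx}\,dt$ if $l$ is odd (in the paper $g_l(x)=G_l(1,x)$). *)

theory Defs
  imports "HOL-Analysis.Analysis"
begin

fun hyperlog :: "real list \<Rightarrow> real \<Rightarrow> real" where
  "hyperlog [] z = 1"
| "hyperlog (\<sigma> # w) z =
     (if \<sigma> = 0 then integral {0..z} (\<lambda>t. hyperlog w t / t)
      else integral {0..z} (\<lambda>t. hyperlog w t / (\<sigma> - t)))"

definition Iw :: "nat \<Rightarrow> nat list set" where
  "Iw m = {i. length i = m \<and> set i \<subseteq> {0,1} \<and> m \<ge> 1 \<and> last i = 1}"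

definition mzv :: "nat list \<Rightarrow> real" where
  "mzv s = infsum (\<lambda>ks. \<Prod>j<length s. 1 / real (ks ! j) ^ (s ! j))
     {ks. length ks = length s \<and> sorted_wrt (>) ks \<and> (\<forall>k\<in>set ks. k \<ge> 1)}"

text \<open>Admissible indices (s_1 \<ge> 2, all s_j \<ge> 1); the empty index (zeta() = 1,
  weight 0) is included so that weight 0 combinations are exactly the integers.\<close>
definition admissible :: "nat list \<Rightarrow> bool" where
  "admissible s \<longleftrightarrow> s = [] \<or> (hd s \<ge> 2 \<and> (\<forall>x\<in>set s. x \<ge> 1))"

definition mzv_span :: "nat \<Rightarrow> complex set" where
  "mzv_span n = {a. \<exists>F c. finite F \<and> (\<forall>s\<in>F. admissible s \<and> sum_list s = n) \<and>
      a = (\<Sum>s\<in>F. of_int (c s) * complex_of_real (mzv s))}"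

text \<open>The functions g_l on (0,1); g_0, g_1 are unused.\<close>
fun g :: "nat \<Rightarrow> real \<Rightarrow> real" where
  "g 0 x = 0"
| "g (Suc 0) x = 0"
| "g (Suc (Suc 0)) x = - ln (1 - x) / x"
| "g (Suc (Suc (Suc n))) x =
     (if even (Suc (Suc n))
      then integral {0..1} (\<lambda>t. t * x * g (Suc (Suc n)) t / (1 - t * x))
      else integral {0..1} (\<lambda>t. g (Suc (Suc n)) t / (1 - t * x)))"

end

theory Submission
  imports Defs
begin


fun A :: "nat list \<Rightarrow> nat \<Rightarrow> real" where
  "A [] n = (if n = 0 then 1 else 0)"
| "A (a # s) n = (if n = 0 then 0 else (\<Sum>k<n. A s k) / real n ^ a)"

definition Z :: "nat list \<Rightarrow> nat \<Rightarrow> real" where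
  "Z s N = (\<Sum>k<N. A s k)"

lemma A_nonneg: "A s n \<ge> 0"
  by (induction s arbitrary: n) (auto intro!: divide_nonneg_nonneg sum_nonneg)

lemma Z_nonneg: "Z s N \<ge> 0"
  unfolding Z_def by (auto intro!: sum_nonneg A_nonneg)

lemma Z_0[simp]: "Z s 0 = 0"
  by (simp add: Z_def)

lemma Z_Suc: "Z s (Suc N) = Z s N + A s N"
  by (simp add: Z_def)

lemma Z_Nil: "Z [] N = (if N = 0 then 0 else 1)"
  unfolding Z_def by (induction N) auto

lemma A_Cons: "A (a # s) n = (if n = 0 then 0 else Z s n / real n ^ a)"
  by (simp add: Z_def)

lemma A_Cons_0[simp]: "A (a # s) 0 = 0"
  by simp

declare A.simps(2)[simp del]

definition lin :: "(int \<times> nat list) list \<Rightarrow> (nat list \<Rightarrow> real) \<Rightarrow> real" where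
  "lin L f = (\<Sum>(c,u)\<leftarrow>L. of_int c * f u)"

lemma lin_Nil[simp]: "lin [] f = 0"
  by (simp add: lin_def)

lemma lin_Cons[simp]: "lin ((c,u) # L) f = of_int c * f u + lin L f"
  by (simp add: lin_def)

lemma lin_append[simp]: "lin (L1 @ L2) f = lin L1 f + lin L2 f"
  by (simp add: lin_def)

lemma lin_add: "lin L (\<lambda>u. f1 u + f2 u) = lin L f1 + lin L f2"
  by (induction L) (auto simp: algebra_simps)

lemma lin_div: "lin L (\<lambda>u. f u / d) = lin L f / d"
  by (induction L) (auto simp: field_simps add_divide_distrib)

lemma lin_zero: "lin L (\<lambda>u. 0) = 0"
  by (induction L) auto

lemma lin_map: "lin (map (\<lambda>(c,u). (c, h u)) L) f = lin L (\<lambda>u. f (h u))"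
  by (induction L) auto

lemma lin_cong: "(\<And>c u. (c,u) \<in> set L \<Longrightarrow> f u = f2 u) \<Longrightarrow> lin L f = lin L f2"
proof (induction L)
  case (Cons p L)
  have "lin L f = lin L f2" by (rule Cons.IH) (rule Cons.prems, auto)
  then show ?case using Cons.prems by (cases p) auto
qed simp

lemma lin_tendsto:
  assumes "\<And>c u. (c,u) \<in> set L \<Longrightarrow> ((\<lambda>N. f u N) \<longlongrightarrow> l u) sequentially"
  shows "((\<lambda>N. lin L (\<lambda>u. f u N)) \<longlongrightarrow> lin L l) sequentially"
  using assms
proof (induction L)
  case Nil
  then show ?case by simp
next
  case (Cons p L)
  obtain c u where p: "p = (c,u)" by (cases p)
  show ?case using Cons p by (auto intro!: tendsto_intros)
qed

definition pos :: "nat list \<Rightarrow> bool" where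
  "pos s \<longleftrightarrow> (\<forall>x\<in>set s. 1 \<le> x)"

lemma stuffle:
  assumes "pos s" "pos t"
  shows "\<exists>L. (\<forall>(c,u)\<in>set L. pos u \<and> sum_list u = sum_list s + sum_list t \<and>
                 (admissible s \<longrightarrow> admissible t \<longrightarrow> admissible u)) \<and>
             (\<forall>N. Z s N * Z t N = lin L (\<lambda>u. Z u N))"
  using assms
proof (induction "length s + length t" arbitrary: s t rule: less_induct)
  case less
  show ?case
  proof (cases s)
    case Nil
    show ?thesis
      by (rule exI[of _ "[(1,t)]"]) (use less.prems Nil in \<open>auto simp: Z_Nil\<close>)
  next
    case (Cons a s')
    note s = Cons
    show ?thesis
    proof (cases t)
      case Nil
      show ?thesis
        by (rule exI[of _ "[(1,s)]"]) (use less.prems Nil in \<open>auto simp: Z_Nil\<close>)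
    next
      case (Cons b t')
      note t = Cons
      have ps': "pos s'" "pos t'" and a: "a \<ge> 1" and b: "b \<ge> 1"
        using less.prems s t by (auto simp: pos_def)
      obtain L1 where L1: "\<forall>(c,u)\<in>set L1. pos u \<and> sum_list u = sum_list s' + sum_list t \<and>
                 (admissible s' \<longrightarrow> admissible t \<longrightarrow> admissible u)"
          "\<forall>N. Z s' N * Z t N = lin L1 (\<lambda>u. Z u N)"
        using less.hyps[of s' t] ps' less.prems s by auto
      obtain L2 where L2: "\<forall>(c,u)\<in>set L2. pos u \<and> sum_list u = sum_list s + sum_list t' \<and>
                 (admissible s \<longrightarrow> admissible t' \<longrightarrow> admissible u)"
          "\<forall>N. Z s N * Z t' N = lin L2 (\<lambda>u. Z u N)"
        using less.hyps[of s t'] ps' less.prems t by auto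
      obtain L3 where L3: "\<forall>(c,u)\<in>set L3. pos u \<and> sum_list u = sum_list s' + sum_list t' \<and>
                 (admissible s' \<longrightarrow> admissible t' \<longrightarrow> admissible u)"
          "\<forall>N. Z s' N * Z t' N = lin L3 (\<lambda>u. Z u N)"
        using less.hyps[of s' t'] ps' less.prems s t by auto
      define L where "L = map (\<lambda>(c,u). (c, a#u)) L1 @ map (\<lambda>(c,u). (c, b#u)) L2 @
                          map (\<lambda>(c,u). (c, (a+b)#u)) L3"
      have P: "\<forall>(c,u)\<in>set L. pos u \<and> sum_list u = sum_list s + sum_list t \<and>
                 (admissible s \<longrightarrow> admissible t \<longrightarrow> admissible u)"
      proof (intro ballI, clarify)
        fix c u assume "(c,u) \<in> set L"
        then consider v where "(c,v) \<in> set L1" "u = a#v" | v where "(c,v) \<in> set L2" "u = b#v"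
          | v where "(c,v) \<in> set L3" "u = (a+b)#v"
          unfolding L_def by auto
        then show "pos u \<and> sum_list u = sum_list s + sum_list t \<and>
                 (admissible s \<longrightarrow> admissible t \<longrightarrow> admissible u)"
        proof cases
          case 1
          then have "pos v \<and> sum_list v = sum_list s' + sum_list t \<and>
                 (admissible s' \<longrightarrow> admissible t \<longrightarrow> admissible v)" using L1(1) by auto
          then show ?thesis using 1 a s by (auto simp: pos_def admissible_def)
        next
          case 2
          then have "pos v \<and> sum_list v = sum_list s + sum_list t' \<and>
                 (admissible s \<longrightarrow> admissible t' \<longrightarrow> admissible v)" using L2(1) by auto
          then show ?thesis using 2 b t by (auto simp: pos_def admissible_def)
        next
          case 3
          then have "pos v \<and> sum_list v = sum_list s' + sum_list t' \<and>
                 (admissible s' \<longrightarrow> admissible t' \<longrightarrow> admissible v)" using L3(1) by auto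
          then show ?thesis using 3 a s t by (auto simp: pos_def admissible_def)
        qed
      qed
      have E: "Z s N * Z t N = lin L (\<lambda>u. Z u N)" for N
      proof (induction N)
        case 0
        then show ?case by (simp add: lin_zero)
      next
        case (Suc N)
        have "lin L (\<lambda>u. Z u (Suc N)) = lin L (\<lambda>u. Z u N) + lin L (\<lambda>u. A u N)"
          by (simp add: Z_Suc lin_add)
        also have "lin L (\<lambda>u. A u N) = A s N * Z t N + Z s N * A t N + A s N * A t N"
        proof (cases "N = 0")
          case True
          then show ?thesis using s t by (simp add: L_def lin_map lin_zero)
        next
          case False
          have "lin L (\<lambda>u. A u N) = lin L1 (\<lambda>u. Z u N / real N ^ a) + lin L2 (\<lambda>u. Z u N / real N ^ b)
             + lin L3 (\<lambda>u. Z u N / real N ^ (a+b))"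
            using False by (simp add: L_def lin_map A_Cons)
          also have "\<dots> = A s N * Z t N + Z s N * A t N + A s N * A t N"
          proof -
            have "lin L1 (\<lambda>u. Z u N / real N ^ a) = Z s' N * Z t N / real N ^ a"
              by (simp add: lin_div L1(2))
            moreover have "lin L2 (\<lambda>u. Z u N / real N ^ b) = Z s N * Z t' N / real N ^ b"
              by (simp add: lin_div L2(2))
            moreover have "lin L3 (\<lambda>u. Z u N / real N ^ (a+b)) = Z s' N * Z t' N / real N ^ (a+b)"
              by (simp add: lin_div L3(2))
            moreover have "A s N = Z s' N / real N ^ a" "A t N = Z t' N / real N ^ b"
              using False s t by (simp_all add: A_Cons)
            ultimately show ?thesis by (simp add: power_add)
          qed
          finally show ?thesis .
        qed
        finally show ?case using Suc by (simp add: Z_Suc algebra_simps)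
      qed
      show ?thesis using P E by blast
    qed
  qed
qed



definition Dl :: "nat list \<Rightarrow> nat list set" where
  "Dl s = {ks. length ks = length s \<and> sorted_wrt (>) ks \<and> (\<forall>k\<in>set ks. k \<ge> 1)}"

definition head0 :: "nat list \<Rightarrow> nat" where
  "head0 ks = (case ks of [] \<Rightarrow> 0 | k # _ \<Rightarrow> k)"

definition Dn :: "nat list \<Rightarrow> nat \<Rightarrow> nat list set" where
  "Dn s n = {ks \<in> Dl s. head0 ks = n}"

definition trm :: "nat list \<Rightarrow> nat list \<Rightarrow> real" where
  "trm s ks = (\<Prod>j<length s. 1 / real (ks ! j) ^ (s ! j))"

lemma Dn_Nil: "Dn [] n = (if n = 0 then {[]} else {})"
  by (auto simp: Dn_def Dl_def head0_def)

lemma sorted_head0: "sorted_wrt (>) ks \<Longrightarrow> (\<forall>x\<in>set ks. x < k) \<longleftrightarrow> (ks = [] \<or> head0 ks < k)"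
  by (cases ks) (auto simp: head0_def)

lemma Dn_Cons: "Dn (a # s) n = (if n = 0 then {} else Cons n ` (\<Union>k<n. Dn s k))"
proof (cases "n = 0")
  case True
  have "ks \<notin> Dn (a # s) 0" for ks
    by (cases ks) (auto simp: Dn_def Dl_def head0_def)
  then show ?thesis using True by auto
next
  case False
  have "ks \<in> Dn (a # s) n \<longleftrightarrow> ks \<in> Cons n ` (\<Union>k<n. Dn s k)" for ks
  proof
    assume "ks \<in> Dn (a # s) n"
    then obtain ks' where ks: "ks = n # ks'" "ks' \<in> Dl s" "\<forall>x\<in>set ks'. x < n"
      using False by (cases ks) (auto simp: Dn_def Dl_def head0_def)
    have "head0 ks' < n"
      using ks sorted_head0[of ks' n] False by (auto simp: Dl_def head0_def)
    then show "ks \<in> Cons n ` (\<Union>k<n. Dn s k)"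
      using ks by (auto simp: Dn_def)
  next
    assume "ks \<in> Cons n ` (\<Union>k<n. Dn s k)"
    then obtain ks' k where ks: "ks = n # ks'" "ks' \<in> Dl s" "head0 ks' = k" "k < n"
      by (auto simp: Dn_def)
    then have "\<forall>x\<in>set ks'. x < n"
      using sorted_head0[of ks' n] by (auto simp: Dl_def)
    then show "ks \<in> Dn (a # s) n"
      using ks False by (auto simp: Dn_def Dl_def head0_def)
  qed
  then have "Dn (a # s) n = Cons n ` (\<Union>k<n. Dn s k)" by (rule set_eqI)
  then show ?thesis using False by simp
qed

lemma finite_Dn: "finite (Dn s n)"
  by (induction s arbitrary: n) (auto simp: Dn_Nil Dn_Cons)

lemma trm_Cons: "trm (a # s) (n # ks) = 1 / real n ^ a * trm s ks"
  unfolding trm_def by (simp add: prod.lessThan_Suc_shift del: prod.lessThan_Suc)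

lemma A_eq_sum: "A s n = (\<Sum>ks\<in>Dn s n. trm s ks)"
proof (induction s arbitrary: n)
  case Nil
  then show ?case by (simp add: Dn_Nil trm_def)
next
  case (Cons a s)
  show ?case
  proof (cases "n = 0")
    case True
    then show ?thesis by (simp add: Dn_Cons)
  next
    case False
    have disj: "disjoint_family_on (Dn s) {..<n}"
      by (auto simp: disjoint_family_on_def Dn_def)
    have "(\<Sum>ks\<in>Dn (a # s) n. trm (a # s) ks) = (\<Sum>ks\<in>(\<Union>k<n. Dn s k). trm (a # s) (n # ks))"
      using False by (simp add: Dn_Cons sum.reindex)
    also have "\<dots> = (\<Sum>k<n. \<Sum>ks\<in>Dn s k. 1 / real n ^ a * trm s ks)"
      by (subst sum.UNION_disjoint_family) (use disj finite_Dn in \<open>auto simp: trm_Cons\<close>)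
    also have "\<dots> = (\<Sum>k<n. A s k) / real n ^ a"
      by (simp add: Cons.IH sum_distrib_left sum_divide_distrib)
    finally show ?thesis using False by (simp add: A.simps(2))
  qed
qed

lemma Dl_Union: "Dl s = (\<Union>n. Dn s n)"
  by (auto simp: Dn_def)

lemma mzv_eq_suminf:
  assumes "summable (A s)"
  shows "mzv s = suminf (A s)"
proof -
  have trm_nn: "trm s ks \<ge> 0" for ks
    unfolding trm_def by (auto intro!: prod_nonneg)
  have h1: "((\<lambda>ks. trm s ks) has_sum A s n) (Dn s n)" for n
    by (simp add: A_eq_sum finite_Dn)
  have h2: "(A s has_sum suminf (A s)) UNIV"
    using assms by (intro sums_nonneg_imp_has_sum) (auto simp: A_nonneg)
  have sm: "(trm s \<circ> snd) summable_on Sigma UNIV (Dn s)"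
    by (rule summable_on_SigmaI[where g = "A s"]) (use h1 h2 trm_nn in \<open>auto simp: summable_on_def\<close>)
  have "((trm s \<circ> snd) has_sum suminf (A s)) (Sigma UNIV (Dn s))"
    by (rule has_sum_SigmaI[OF _ h2 sm]) (use h1 in auto)
  moreover have "inj_on snd (Sigma UNIV (Dn s))"
    by (auto simp: inj_on_def Dn_def)
  moreover have "snd ` Sigma UNIV (Dn s) = Dl s"
    by (auto simp: Dl_Union) (metis SigmaI UNIV_I image_eqI snd_conv)
  ultimately have "(trm s has_sum suminf (A s)) (Dl s)"
    using has_sum_reindex[of snd "Sigma UNIV (Dn s)" "trm s"] by simp
  then have "(trm s has_sum suminf (A s)) {ks. length ks = length s \<and> sorted_wrt (>) ks \<and> (\<forall>k\<in>set ks. k \<ge> 1)}"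
    by (simp only: Dl_def)
  then show ?thesis
    unfolding mzv_def trm_def[abs_def] by (rule infsumI)
qed

lemma mzv_Nil: "mzv [] = 1"
proof -
  have "{ks::nat list. length ks = 0 \<and> sorted_wrt (>) ks \<and> (\<forall>k\<in>set ks. k \<ge> 1)} = {[]}"
    by auto
  then show ?thesis by (simp add: mzv_def)
qed

lemma sqrt_step: "2 * sqrt (real N) + 1 / sqrt (real N + 1) \<le> 2 * sqrt (real N + 1)"
proof -
  define a b where "a = sqrt (real N)" and "b = sqrt (real N + 1)"
  have b: "b > 0" "b * b = real N + 1" unfolding b_def by auto
  have "a * b = sqrt (real N * (real N + 1))" unfolding a_def b_def by (simp add: real_sqrt_mult)
  also have "\<dots> \<le> sqrt ((real N + 1/2)^2)"
    by (intro real_sqrt_le_mono) (simp add: power2_eq_square algebra_simps)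
  also have "\<dots> = real N + 1/2" by simp
  finally have ab: "a * b \<le> real N + 1/2" .
  have "2 * a + 1 / b = (2 * a * b + 1) / b" using b by (simp add: field_simps)
  also have "\<dots> \<le> (2 * b * b) / b" using ab b by (intro divide_right_mono) auto
  also have "\<dots> = 2 * b" using b by simp
  finally show ?thesis unfolding a_def b_def .
qed

lemma sqrt_sum_bound': "(\<Sum>n\<in>{1..N}. 1 / sqrt (real n)) \<le> 2 * sqrt (real N)"
proof (induction N)
  case 0
  then show ?case by simp
next
  case (Suc N)
  have "(\<Sum>n\<in>{1..Suc N}. 1 / sqrt (real n)) = (\<Sum>n\<in>{1..N}. 1 / sqrt (real n)) + 1 / sqrt (real N + 1)"
    by (simp add: add.commute)
  also have "\<dots> \<le> 2 * sqrt (real N) + 1 / sqrt (real N + 1)" using Suc by simp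
  also have "\<dots> \<le> 2 * sqrt (real N + 1)" by (rule sqrt_step)
  finally show ?case by (simp add: add.commute)
qed

lemma sqrt_sum_bound: "(\<Sum>n\<in>{1..<N}. 1 / sqrt (real n)) \<le> 2 * sqrt (real N)"
proof -
  have "(\<Sum>n\<in>{1..<N}. 1 / sqrt (real n)) \<le> (\<Sum>n\<in>{1..N}. 1 / sqrt (real n))"
    by (intro sum_mono2) auto
  also have "\<dots> \<le> 2 * sqrt (real N)" by (rule sqrt_sum_bound')
  finally show ?thesis .
qed

lemma sqrt_div: "n \<ge> 1 \<Longrightarrow> K * sqrt (real n) / real n = K / sqrt (real n)"
proof -
  assume n: "n \<ge> 1"
  have sn: "sqrt (real n) > 0" using n by simp
  have "real n = sqrt (real n) * sqrt (real n)" by simp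
  then have "K * sqrt (real n) / real n = K * sqrt (real n) / (sqrt (real n) * sqrt (real n))"
    by metis
  also have "\<dots> = K / sqrt (real n)" using sn by (simp add: field_simps)
  finally show ?thesis .
qed

lemma Z_bound: "pos s \<Longrightarrow> \<exists>K\<ge>0. \<forall>N. Z s N \<le> K * sqrt (real N)"
proof (induction s)
  case Nil
  show ?case by (rule exI[of _ 1]) (auto simp: Z_Nil)
next
  case (Cons a s)
  then obtain K where K: "K \<ge> 0" "\<And>N. Z s N \<le> K * sqrt (real N)" and a: "a \<ge> 1"
    by (auto simp: pos_def)
  have Ab: "A (a # s) n \<le> K / sqrt (real n)" if "n \<ge> 1" for n
  proof -
    have "real n \<le> real n ^ a" using that a
      by (metis of_nat_1 of_nat_le_iff of_nat_power power_increasing power_one_right)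
    have "A (a # s) n = Z s n / real n ^ a" using that by (simp add: A_Cons)
    also have "\<dots> \<le> K * sqrt (real n) / real n"
      using K(2)[of n] \<open>real n \<le> real n ^ a\<close> that Z_nonneg[of s n]
      by (intro frac_le) auto
    also have "\<dots> = K / sqrt (real n)"
      using that by (rule sqrt_div)
    finally show ?thesis .
  qed
  have "Z (a # s) N \<le> (2 * K) * sqrt (real N)" for N
  proof -
    have "Z (a # s) N = (\<Sum>n\<in>{1..<N}. A (a # s) n)"
      unfolding Z_def by (rule sum.mono_neutral_right) (auto simp: A_Cons)
    also have "\<dots> \<le> (\<Sum>n\<in>{1..<N}. K * (1 / sqrt (real n)))"
      using Ab by (intro sum_mono) auto
    also have "\<dots> \<le> K * (2 * sqrt (real N))"
      unfolding sum_distrib_left[symmetric] using sqrt_sum_bound[of N] K(1) by (rule mult_left_mono)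
    finally show ?thesis by simp
  qed
  then show ?case using K(1) by (intro exI[of _ "2*K"]) auto
qed

lemma A_bound: "pos s \<Longrightarrow> \<exists>K\<ge>0. \<forall>n\<ge>1. A s n \<le> K / sqrt (real n)"
proof (cases s)
  case Nil
  then show ?thesis by auto
next
  case (Cons a s')
  assume p: "pos s"
  then obtain K where K: "K \<ge> 0" "\<And>N. Z s' N \<le> K * sqrt (real N)" and a: "a \<ge> 1"
    using Z_bound[of s'] Cons by (auto simp: pos_def)
  have "A s n \<le> K / sqrt (real n)" if "n \<ge> 1" for n
  proof -
    have "real n \<le> real n ^ a" using that a
      by (metis of_nat_1 of_nat_le_iff of_nat_power power_increasing power_one_right)
    have "A s n = Z s' n / real n ^ a" using that Cons by (simp add: A_Cons)
    also have "\<dots> \<le> K * sqrt (real n) / real n"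
      using K(2)[of n] \<open>real n \<le> real n ^ a\<close> that Z_nonneg[of s' n]
      by (intro frac_le) auto
    also have "\<dots> = K / sqrt (real n)"
      using that by (rule sqrt_div)
    finally show ?thesis .
  qed
  then show ?thesis using K by auto
qed

lemma A_le_1_at0: "A s 0 \<le> 1"
  by (cases s) auto

lemma A_bounded: "pos s \<Longrightarrow> \<exists>K\<ge>0. \<forall>n. A s n \<le> K"
proof -
  assume "pos s"
  then obtain K where K: "K \<ge> 0" "\<forall>n\<ge>1. A s n \<le> K / sqrt (real n)" using A_bound by blast
  have "A s n \<le> max 1 K" for n
  proof (cases "n = 0")
    case True then show ?thesis using A_le_1_at0[of s] by simp
  next
    case False
    then have "A s n \<le> K / sqrt (real n)" using K by auto
    also have "\<dots> \<le> K / 1" using False K(1) by (intro divide_left_mono) auto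
    also have "\<dots> = K" by simp
    finally show ?thesis by simp
  qed
  then show ?thesis by (intro exI[of _ "max 1 K"]) auto
qed

lemma summable_32: "summable (\<lambda>n. real n powr (-3/2))"
  by (subst summable_real_powr_iff) simp

lemma sqrt_n_n: "n \<ge> 1 \<Longrightarrow> 1 / (sqrt (real n) * real n) = real n powr (-3/2)"
proof -
  assume n: "n \<ge> 1"
  have "real n powr (3/2) = real n powr (1/2 + 1)" by simp
  also have "\<dots> = real n powr (1/2) * real n powr 1"
    by (rule powr_add)
  also have "\<dots> = sqrt (real n) * real n"
    using n by (simp add: powr_half_sqrt)
  finally have e: "real n powr (3/2) = sqrt (real n) * real n" .
  have "real n powr (-3/2) = real n powr (- (3/2))" by simp
  also have "\<dots> = inverse (real n powr (3/2))" by (rule powr_minus)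
  also have "\<dots> = 1 / (sqrt (real n) * real n)" by (simp only: e inverse_eq_divide)
  finally show ?thesis by simp
qed

lemma summable_A_div:
  assumes "pos s" "\<And>n. n \<ge> 1 \<Longrightarrow> d n \<ge> real n"
  shows "summable (\<lambda>n. A s n / d n)"
proof -
  obtain K where K: "K \<ge> 0" "\<forall>n\<ge>1. A s n \<le> K / sqrt (real n)" using A_bound assms(1) by blast
  show ?thesis
  proof (rule summable_comparison_test'[where N = 1])
    show "summable (\<lambda>n. K * real n powr (-3/2))" using summable_32 by (rule summable_mult)
    fix n :: nat assume n: "n \<ge> 1"
    have dn: "d n \<ge> real n" "real n > 0" using assms(2)[OF n] n by auto
    have "norm (A s n / d n) = A s n / d n" using dn A_nonneg[of s n] by simp
    also have "\<dots> \<le> (K / sqrt (real n)) / real n"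
      using K n dn A_nonneg[of s n] by (intro frac_le) auto
    also have "\<dots> = K * (1 / (sqrt (real n) * real n))" by simp
    also have "\<dots> = K * real n powr (-3/2)" using sqrt_n_n[OF n] by simp
    finally show "norm (A s n / d n) \<le> K * real n powr (-3/2)" .
  qed
qed

lemma summable_A_adm:
  assumes "admissible s" "s \<noteq> []"
  shows "summable (A s)"
proof -
  obtain a s' where s: "s = a # s'" using assms(2) by (cases s) auto
  have a: "a \<ge> 2" and ps: "pos s'" using assms s by (auto simp: admissible_def pos_def)
  have p1: "pos (1 # s')" using ps by (auto simp: pos_def)
  have "summable (\<lambda>n. A (1 # s') n / real n)"
    by (rule summable_A_div[OF p1]) auto
  then show ?thesis
  proof (rule summable_comparison_test'[where N = 1])
    fix n :: nat assume n: "n \<ge> 1"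
    have "real n ^ 2 \<le> real n ^ a" using n a by (intro power_increasing) auto
    then have "real n * real n \<le> real n ^ a" by (simp add: power2_eq_square)
    then have "Z s' n / real n ^ a \<le> Z s' n / (real n * real n)"
      using n Z_nonneg[of s' n] by (intro divide_left_mono) auto
    then show "norm (A s n) \<le> A (1 # s') n / real n"
      using n s A_nonneg[of s n] by (simp add: A_Cons)
  qed
qed

lemma Z_tendsto_mzv:
  assumes "admissible s"
  shows "(Z s \<longlongrightarrow> mzv s) sequentially"
proof (cases "s = []")
  case True
  have "eventually (\<lambda>N. Z s N = 1) sequentially"
    unfolding eventually_sequentially using True by (intro exI[of _ 1]) (auto simp: Z_Nil)
  then show ?thesis using True mzv_Nil by (simp add: tendsto_eventually)
next
  case False
  have "summable (A s)" using summable_A_adm assms False by blast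
  then show ?thesis
    unfolding Z_def[abs_def] using mzv_eq_suminf summable_LIMSEQ by metis
qed

lemma admissible_pos: "admissible s \<Longrightarrow> pos s"
  by (auto simp: admissible_def pos_def)

lemma mzv_mult:
  assumes "admissible s" "admissible t"
  shows "\<exists>L. (\<forall>(c,u)\<in>set L. admissible u \<and> sum_list u = sum_list s + sum_list t) \<and>
             mzv s * mzv t = lin L mzv"
proof -
  from stuffle[OF admissible_pos[OF assms(1)] admissible_pos[OF assms(2)]]
  obtain L where L: "\<forall>(c,u)\<in>set L. pos u \<and> sum_list u = sum_list s + sum_list t \<and>
                 (admissible s \<longrightarrow> admissible t \<longrightarrow> admissible u)"
             "\<forall>N. Z s N * Z t N = lin L (\<lambda>u. Z u N)"
    by (elim exE conjE) (rule that)
  have adm: "admissible u \<and> sum_list u = sum_list s + sum_list t" if "(c,u) \<in> set L" for c u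
  proof -
    from L(1) that have "pos u \<and> sum_list u = sum_list s + sum_list t \<and>
                 (admissible s \<longrightarrow> admissible t \<longrightarrow> admissible u)" by auto
    then show ?thesis using assms by simp
  qed
  have lim1: "((\<lambda>N. Z s N * Z t N) \<longlongrightarrow> mzv s * mzv t) sequentially"
    by (intro tendsto_mult Z_tendsto_mzv assms)
  have lim2: "((\<lambda>N. lin L (\<lambda>u. Z u N)) \<longlongrightarrow> lin L mzv) sequentially"
    by (intro lin_tendsto Z_tendsto_mzv) (use adm in blast)
  have eq: "(\<lambda>N. Z s N * Z t N) = (\<lambda>N. lin L (\<lambda>u. Z u N))"
    using L(2) by (intro ext) simp
  have "mzv s * mzv t = lin L mzv"
    using LIMSEQ_unique[OF lim1] lim2 unfolding eq by blast
  moreover have "\<forall>(c,u)\<in>set L. admissible u \<and> sum_list u = sum_list s + sum_list t"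
    using adm by blast
  ultimately show ?thesis by blast
qed

definition Sp :: "nat \<Rightarrow> real set" where
  "Sp n = {x. \<exists>L. (\<forall>(c,u)\<in>set L. admissible u \<and> sum_list u = n) \<and> x = lin L mzv}"

lemma Sp_0: "0 \<in> Sp n"
  unfolding Sp_def by (rule CollectI, rule exI[of _ "[]"]) auto

lemma Sp_add: "x \<in> Sp n \<Longrightarrow> y \<in> Sp n \<Longrightarrow> x + y \<in> Sp n"
proof -
  assume "x \<in> Sp n" "y \<in> Sp n"
  then obtain L1 L2 where L1: "\<forall>(c,u)\<in>set L1. admissible u \<and> sum_list u = n" "x = lin L1 mzv"
    and L2: "\<forall>(c,u)\<in>set L2. admissible u \<and> sum_list u = n" "y = lin L2 mzv"
    unfolding Sp_def by blast
  have "\<forall>(c,u)\<in>set (L1 @ L2). admissible u \<and> sum_list u = n"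
    using L1(1) L2(1) by auto
  moreover have "x + y = lin (L1 @ L2) mzv" using L1(2) L2(2) by simp
  ultimately show ?thesis unfolding Sp_def by blast
qed

lemma Sp_int_mult: "x \<in> Sp n \<Longrightarrow> of_int c * x \<in> Sp n"
proof -
  assume "x \<in> Sp n"
  then obtain L where L: "\<forall>(c,u)\<in>set L. admissible u \<and> sum_list u = n" "x = lin L mzv"
    unfolding Sp_def by blast
  have "lin (map (\<lambda>(d,u). (c*d, u)) L) mzv = of_int c * lin L mzv"
    by (induction L) (auto simp: algebra_simps)
  moreover have "\<forall>(d,u)\<in>set (map (\<lambda>(d,u). (c*d, u)) L). admissible u \<and> sum_list u = n"
    using L(1) by auto
  ultimately show ?thesis unfolding Sp_def using L(2) by (intro CollectI exI[of _ "map (\<lambda>(d,u). (c*d, u)) L"]) simp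
qed

lemma Sp_neg: "x \<in> Sp n \<Longrightarrow> - x \<in> Sp n"
  using Sp_int_mult[of x n "-1"] by simp

lemma Sp_mzv: "admissible s \<Longrightarrow> mzv s \<in> Sp (sum_list s)"
  unfolding Sp_def by (rule CollectI, rule exI[of _ "[(1,s)]"]) auto

lemma Sp_one: "1 \<in> Sp 0"
  using Sp_mzv[of "[]"] by (simp add: mzv_Nil admissible_def)

lemma Sp_sum: "finite I \<Longrightarrow> (\<And>i. i \<in> I \<Longrightarrow> f i \<in> Sp n) \<Longrightarrow> (\<Sum>i\<in>I. f i) \<in> Sp n"
  by (induction I rule: finite_induct) (auto intro: Sp_add Sp_0)

lemma Sp_lin: "(\<And>c u. (c,u) \<in> set L \<Longrightarrow> admissible u \<and> sum_list u = n) \<Longrightarrow> lin L mzv \<in> Sp n"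
  unfolding Sp_def by (intro CollectI exI[of _ L]) auto

lemma Sp_cases:
  assumes "x \<in> Sp n"
  obtains L where "\<And>c u. (c,u) \<in> set L \<Longrightarrow> admissible u \<and> sum_list u = n" "x = lin L mzv"
  using assms unfolding Sp_def by auto

lemma Sp_mzv_mult: "admissible s \<Longrightarrow> y \<in> Sp n \<Longrightarrow> mzv s * y \<in> Sp (sum_list s + n)"
proof -
  assume s: "admissible s" and y: "y \<in> Sp n"
  obtain L where L: "\<And>c u. (c,u) \<in> set L \<Longrightarrow> admissible u \<and> sum_list u = n" "y = lin L mzv"
    using Sp_cases[OF y] by metis
  have "mzv s * lin L mzv \<in> Sp (sum_list s + n)" using L(1)
  proof (induction L)
    case Nil
    then show ?case by (simp add: Sp_0)
  next
    case (Cons p L)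
    obtain c u where p: "p = (c,u)" by (cases p)
    have u: "admissible u" "sum_list u = n" using Cons.prems[of c u] p by auto
    obtain M where M: "\<forall>(d,v)\<in>set M. admissible v \<and> sum_list v = sum_list s + sum_list u"
       "mzv s * mzv u = lin M mzv" using mzv_mult[OF s u(1)] by (elim exE conjE) (rule that)
    have "lin M mzv \<in> Sp (sum_list s + n)"
      by (rule Sp_lin) (use M(1) u(2) in auto)
    then have "of_int c * (mzv s * mzv u) \<in> Sp (sum_list s + n)"
      unfolding M(2) by (rule Sp_int_mult)
    moreover have "mzv s * lin L mzv \<in> Sp (sum_list s + n)"
      by (rule Cons.IH) (use Cons.prems in auto)
    ultimately have "of_int c * (mzv s * mzv u) + mzv s * lin L mzv \<in> Sp (sum_list s + n)"
      by (rule Sp_add)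
    then show ?case using p by (simp add: algebra_simps)
  qed
  then show ?thesis using L by simp
qed

lemma Sp_mult: "x \<in> Sp m \<Longrightarrow> y \<in> Sp n \<Longrightarrow> x * y \<in> Sp (m + n)"
proof -
  assume x: "x \<in> Sp m" and y: "y \<in> Sp n"
  obtain L where L: "\<And>c u. (c,u) \<in> set L \<Longrightarrow> admissible u \<and> sum_list u = m" "x = lin L mzv"
    using Sp_cases[OF x] by metis
  have "lin L mzv * y \<in> Sp (m + n)" using L(1)
  proof (induction L)
    case Nil
    then show ?case by (simp add: Sp_0)
  next
    case (Cons p L)
    obtain c u where p: "p = (c,u)" by (cases p)
    have u: "admissible u" "sum_list u = m" using Cons.prems[of c u] p by auto
    have "of_int c * (mzv u * y) \<in> Sp (m + n)"
      using Sp_mzv_mult[OF u(1) y] u(2) by (intro Sp_int_mult) simp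
    moreover have "lin L mzv * y \<in> Sp (m + n)"
      by (rule Cons.IH) (use Cons.prems in auto)
    ultimately have "of_int c * (mzv u * y) + lin L mzv * y \<in> Sp (m + n)"
      by (rule Sp_add)
    then show ?case using p by (simp add: algebra_simps)
  qed
  then show ?thesis using L by simp
qed

lemma lin_as_sum:
  assumes "finite U" "snd ` set L \<subseteq> U"
  shows "lin L f = (\<Sum>u\<in>U. of_int (sum_list (map fst (filter (\<lambda>p. snd p = u) L))) * f u)"
  using assms(2)
proof (induction L)
  case Nil
  then show ?case by simp
next
  case (Cons p L)
  obtain c v where p: "p = (c,v)" by (cases p)
  have v: "v \<in> U" using Cons.prems p by auto
  have "lin (p # L) f = of_int c * f v + lin L f" using p by simp
  also have "lin L f = (\<Sum>u\<in>U. of_int (sum_list (map fst (filter (\<lambda>p. snd p = u) L))) * f u)"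
    using Cons by auto
  also have "of_int c * f v = (\<Sum>u\<in>U. (if u = v then of_int c * f u else 0))"
    using v assms(1) by simp
  finally show ?case using p
    by (simp add: sum.distrib[symmetric] algebra_simps) (intro sum.cong refl, auto simp: algebra_simps)
qed

lemma Sp_mzv_span: "x \<in> Sp n \<Longrightarrow> complex_of_real x \<in> mzv_span n"
proof -
  assume "x \<in> Sp n"
  then obtain L where L: "\<forall>(c,u)\<in>set L. admissible u \<and> sum_list u = n" "x = lin L mzv"
    unfolding Sp_def by blast
  define F where "F = snd ` set L"
  define c where "c u = sum_list (map fst (filter (\<lambda>p. snd p = u) L))" for u
  have F: "finite F" "\<forall>s\<in>F. admissible s \<and> sum_list s = n"
    using L(1) unfolding F_def by auto
  have "x = (\<Sum>u\<in>F. of_int (c u) * mzv u)"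
    using L(2) lin_as_sum[of F L mzv] F(1) unfolding F_def c_def by simp
  then have "complex_of_real x = (\<Sum>s\<in>F. of_int (c s) * complex_of_real (mzv s))"
    by simp
  then show ?thesis unfolding mzv_span_def using F by blast
qed



fun idx :: "nat list \<Rightarrow> nat list" where
  "idx [] = []"
| "idx (c # w) = (if c = 0 then (case idx w of [] \<Rightarrow> [] | x # r \<Rightarrow> Suc x # r) else 1 # idx w)"

definition wok :: "nat list \<Rightarrow> bool" where
  "wok w \<longleftrightarrow> set w \<subseteq> {0,1} \<and> (w \<noteq> [] \<longrightarrow> last w = 1)"

definition cf :: "nat list \<Rightarrow> nat \<Rightarrow> real" where
  "cf w = A (idx w)"

lemma wok_Nil[simp]: "wok []"
  by (simp add: wok_def)

lemma wok_ConsD: "wok (c # w) \<Longrightarrow> wok w \<and> (c = 0 \<or> c = 1) \<and> (w = [] \<longrightarrow> c = 1)"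
  by (cases w) (auto simp: wok_def)

lemma wok_Cons0: "wok w \<Longrightarrow> w \<noteq> [] \<Longrightarrow> wok (0 # w)"
  by (auto simp: wok_def)

lemma wok_Cons1: "wok w \<Longrightarrow> wok (1 # w)"
  by (auto simp: wok_def)

lemma idx_ne: "wok w \<Longrightarrow> w \<noteq> [] \<Longrightarrow> idx w \<noteq> []"
proof (induction w)
  case Nil
  then show ?case by simp
next
  case (Cons c w)
  then show ?case using wok_ConsD[OF Cons.prems(1)] by (auto split: list.splits)
qed

lemma pos_Cons[simp]: "pos (a # r) \<longleftrightarrow> 1 \<le> a \<and> pos r"
  by (simp add: pos_def)

lemma pos_Nil[simp]: "pos []"
  by (simp add: pos_def)

lemma pos_idx: "wok w \<Longrightarrow> pos (idx w)"
proof (induction w)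
  case Nil
  then show ?case by (simp add: pos_def)
next
  case (Cons c w)
  then show ?case using wok_ConsD[OF Cons.prems(1)] by (auto split: list.splits)
qed

lemma sum_idx: "wok w \<Longrightarrow> sum_list (idx w) = length w"
proof (induction w)
  case Nil
  then show ?case by simp
next
  case (Cons c w)
  have w: "wok w" "c = 0 \<or> c = 1" "w = [] \<longrightarrow> c = 1" using wok_ConsD[OF Cons.prems(1)] by auto
  show ?case
  proof (cases "c = 0")
    case True
    then have "w \<noteq> []" using w by auto
    then obtain x r where "idx w = x # r" using idx_ne[OF w(1)] by (cases "idx w") auto
    then show ?thesis using True Cons.IH w(1) by simp
  next
    case False
    then show ?thesis using Cons.IH w(1) by simp
  qed
qed

lemma adm_idx0: "wok w \<Longrightarrow> w \<noteq> [] \<Longrightarrow> admissible (idx (0 # w))"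
proof -
  assume w: "wok w" "w \<noteq> []"
  then obtain x r where xr: "idx w = x # r" using idx_ne[OF w] by (cases "idx w") auto
  have "pos (x # r)" using pos_idx[OF w(1)] xr by simp
  then show ?thesis using xr by (auto simp: admissible_def pos_def)
qed

lemma cf_Nil: "cf [] n = (if n = 0 then 1 else 0)"
  by (simp add: cf_def)

lemma cf_nonneg: "cf w n \<ge> 0"
  by (simp add: cf_def A_nonneg)

lemma cf_0: "wok w \<Longrightarrow> w \<noteq> [] \<Longrightarrow> cf w 0 = 0"
proof -
  assume w: "wok w" "w \<noteq> []"
  then obtain x r where xr: "idx w = x # r" using idx_ne[OF w] by (cases "idx w") auto
  then show ?thesis by (simp add: cf_def)
qed

lemma cf_Cons0: "wok w \<Longrightarrow> w \<noteq> [] \<Longrightarrow> cf (0 # w) n = cf w n / real n"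
proof -
  assume w: "wok w" "w \<noteq> []"
  then obtain x r where xr: "idx w = x # r" using idx_ne[OF w] by (cases "idx w") auto
  then show ?thesis by (simp add: cf_def A_Cons)
qed

lemma cf_Cons1: "cf (1 # w) n = (if n = 0 then 0 else (\<Sum>k<n. cf w k) / real n)"
  by (simp add: cf_def A_Cons Z_def)

lemma cf_bounded: "wok w \<Longrightarrow> \<exists>K\<ge>0. \<forall>n. cf w n \<le> K"
  unfolding cf_def using A_bounded pos_idx by blast

lemma summable_cf_div: "wok w \<Longrightarrow> (\<And>n. n \<ge> 1 \<Longrightarrow> d n \<ge> real n) \<Longrightarrow> summable (\<lambda>n. cf w n / d n)"
  unfolding cf_def by (rule summable_A_div[OF pos_idx])

definition ps :: "nat list \<Rightarrow> real \<Rightarrow> real" where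
  "ps w x = (\<Sum>n. cf w n * x ^ n)"

lemma ps_summable: "wok w \<Longrightarrow> \<bar>x\<bar> < 1 \<Longrightarrow> summable (\<lambda>n. cf w n * x ^ n)"
proof -
  assume w: "wok w" and x: "\<bar>x\<bar> < 1"
  obtain K where K: "K \<ge> 0" "\<And>n. cf w n \<le> K" using cf_bounded[OF w] by blast
  show ?thesis
  proof (rule summable_comparison_test'[where N = 0])
    show "summable (\<lambda>n. K * \<bar>x\<bar> ^ n)" using x by (intro summable_mult summable_geometric) simp
    fix n :: nat
    show "norm (cf w n * x ^ n) \<le> K * \<bar>x\<bar> ^ n"
      using K cf_nonneg[of w n] by (simp add: abs_mult power_abs mult_right_mono)
  qed
qed

lemma ps_norm_summable: "wok w \<Longrightarrow> \<bar>x\<bar> < 1 \<Longrightarrow> summable (\<lambda>n. norm (cf w n * x ^ n))"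
proof -
  assume w: "wok w" and x: "\<bar>x\<bar> < 1"
  have "summable (\<lambda>n. cf w n * \<bar>x\<bar> ^ n)" using ps_summable[OF w, of "\<bar>x\<bar>"] x by simp
  then show ?thesis by (simp add: abs_mult power_abs cf_nonneg)
qed

lemma ps_deriv: "wok w \<Longrightarrow> \<bar>x\<bar> < 1 \<Longrightarrow> (ps w has_field_derivative (\<Sum>n. diffs (cf w) n * x ^ n)) (at x)"
  unfolding ps_def[abs_def] by (rule termdiffs_strong'[where K = 1]) (auto intro: ps_summable)

lemma ps_isCont: "wok w \<Longrightarrow> \<bar>x\<bar> < 1 \<Longrightarrow> isCont (ps w) x"
  using ps_deriv DERIV_isCont by blast

lemma ps_zero: "ps w 0 = cf w 0"
  unfolding ps_def by (rule powser_zero)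

lemma ps_Nil: "ps [] x = 1"
proof -
  have "(\<lambda>n. cf [] n * x ^ n) = (\<lambda>n. if n = 0 then 1 else 0)"
    by (auto simp: cf_Nil)
  moreover have "(\<lambda>n::nat. if n = 0 then 1 else (0::real)) sums 1"
    using sums_single[of 0 "\<lambda>_. 1::real"] by simp
  ultimately show ?thesis unfolding ps_def by (simp add: sums_iff)
qed

lemma deriv0:
  assumes w: "wok w" "w \<noteq> []" and x: "\<bar>x\<bar> < 1" "x \<noteq> 0"
  shows "(\<Sum>n. diffs (cf (0 # w)) n * x ^ n) = ps w x / x"
proof -
  have d: "diffs (cf (0 # w)) n = cf w (Suc n)" for n
    unfolding diffs_def using cf_Cons0[OF w, of "Suc n"] by simp
  have "(\<lambda>n. cf w (Suc n) * x ^ Suc n) sums (ps w x - cf w 0 * x ^ 0)"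
    using ps_summable[OF w(1) x(1)] unfolding ps_def
    by (subst sums_Suc_iff) (simp add: summable_sums)
  then have "(\<lambda>n. cf w (Suc n) * x ^ Suc n / x) sums ((ps w x - cf w 0 * x ^ 0) / x)"
    by (rule sums_divide)
  then have "(\<lambda>n. cf w (Suc n) * x ^ Suc n / x) sums (ps w x / x)"
    using cf_0[OF w] by simp
  moreover have "(\<lambda>n. cf w (Suc n) * x ^ Suc n / x) = (\<lambda>n. diffs (cf (0 # w)) n * x ^ n)"
    using x(2) by (intro ext) (simp add: d)
  ultimately show ?thesis by (simp add: sums_iff)
qed

lemma deriv1:
  assumes w: "wok w" and x: "\<bar>x\<bar> < 1"
  shows "(\<Sum>n. diffs (cf (1 # w)) n * x ^ n) = ps w x / (1 - x)"
proof -
  have d: "diffs (cf (1 # w)) n = (\<Sum>k\<le>n. cf w k)" for n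
    unfolding diffs_def cf_Cons1 by (simp add: lessThan_Suc_atMost)
  have g: "summable (\<lambda>k. norm (x ^ k))" using x by (simp add: power_abs)
  have "ps w x * (\<Sum>k. x ^ k) = (\<Sum>k. \<Sum>i\<le>k. (cf w i * x ^ i) * x ^ (k - i))"
    unfolding ps_def by (rule Cauchy_product[OF ps_norm_summable[OF w x] g])
  also have "\<dots> = (\<Sum>k. diffs (cf (1 # w)) k * x ^ k)"
  proof (intro suminf_cong)
    fix k
    have "(\<Sum>i\<le>k. (cf w i * x ^ i) * x ^ (k - i)) = (\<Sum>i\<le>k. cf w i * x ^ k)"
      by (intro sum.cong refl) (simp add: mult.assoc power_add[symmetric])
    then show "(\<Sum>i\<le>k. (cf w i * x ^ i) * x ^ (k - i)) = diffs (cf (1 # w)) k * x ^ k"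
      unfolding d by (simp add: sum_distrib_right)
  qed
  finally have "ps w x * (1 / (1 - x)) = (\<Sum>k. diffs (cf (1 # w)) k * x ^ k)"
    using x by (simp add: suminf_geometric)
  then show ?thesis by simp
qed

lemma hyperlog_ps: "wok w \<Longrightarrow> 0 \<le> z \<Longrightarrow> z < 1 \<Longrightarrow> hyperlog (map real w) z = ps w z"
proof (induction w arbitrary: z)
  case Nil
  then show ?case by (simp add: ps_Nil)
next
  case (Cons c w)
  have w: "wok w" "c = 0 \<or> c = 1" "w = [] \<longrightarrow> c = 1" using wok_ConsD[OF Cons.prems(1)] by auto
  have cw: "wok (c # w)" by fact
  have cont: "continuous_on {0..z} (ps (c # w))"
    using Cons.prems by (intro continuous_at_imp_continuous_on ballI ps_isCont[OF cw]) auto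
  have ps0: "ps (c # w) 0 = 0"
    using cf_0[OF cw] by (simp add: ps_zero)
  show ?case
  proof (cases "c = 0")
    case True
    then have wne: "w \<noteq> []" using w by auto
    have "((\<lambda>t. hyperlog (map real w) t / t) has_integral (ps (c # w) z - ps (c # w) 0)) {0..z}"
    proof (rule fundamental_theorem_of_calculus_interior_strong[where S = "{}"])
      fix t assume t: "t \<in> {0<..<z} - {}"
      then have t': "\<bar>t\<bar> < 1" "t \<noteq> 0" "0 \<le> t" "t < 1" using Cons.prems by auto
      have "(ps (c # w) has_field_derivative (ps w t / t)) (at t)"
        using ps_deriv[OF cw t'(1)] deriv0[OF w(1) wne t'(1,2)] True by simp
      then show "(ps (c # w) has_vector_derivative (hyperlog (map real w) t / t)) (at t)"
        using Cons.IH[OF w(1) t'(3,4)] by (simp add: has_real_derivative_iff_has_vector_derivative)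
    qed (use cont Cons.prems in auto)
    then show ?thesis using True ps0 by (simp add: integral_unique)
  next
    case False
    then have c1: "c = 1" using w by auto
    have "((\<lambda>t. hyperlog (map real w) t / (1 - t)) has_integral (ps (c # w) z - ps (c # w) 0)) {0..z}"
    proof (rule fundamental_theorem_of_calculus_interior_strong[where S = "{}"])
      fix t assume t: "t \<in> {0<..<z} - {}"
      then have t': "\<bar>t\<bar> < 1" "0 \<le> t" "t < 1" using Cons.prems by auto
      have "(ps (c # w) has_field_derivative (ps w t / (1 - t))) (at t)"
        using ps_deriv[OF cw t'(1)] deriv1[OF w(1) t'(1)] c1 by simp
      then show "(ps (c # w) has_vector_derivative (hyperlog (map real w) t / (1 - t))) (at t)"
        using Cons.IH[OF w(1) t'(2,3)] by (simp add: has_real_derivative_iff_has_vector_derivative)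
    qed (use cont Cons.prems in auto)
    then show ?thesis using c1 ps0 by (simp add: integral_unique)
  qed
qed



lemma poly_integral: "((\<lambda>t::real. t ^ m) has_integral (1 / real (Suc m))) {0..1}"
proof -
  have "((\<lambda>t::real. t ^ m) has_integral (1 ^ Suc m / real (Suc m) - 0 ^ Suc m / real (Suc m))) {0..1}"
  proof (rule fundamental_theorem_of_calculus)
    fix t :: real assume "t \<in> {0..1}"
    have "((\<lambda>t. t ^ Suc m / real (Suc m)) has_real_derivative t ^ m) (at t within {0..1})"
      by (rule derivative_eq_intros refl | simp)+
    then show "((\<lambda>t. t ^ Suc m / real (Suc m)) has_vector_derivative t ^ m) (at t within {0..1})"
      by (simp add: has_real_derivative_iff_has_vector_derivative)
  qed simp
  then show ?thesis by simp
qed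

lemma tx_lt1: "0 \<le> t \<Longrightarrow> t \<le> 1 \<Longrightarrow> 0 < x \<Longrightarrow> x < (1::real) \<Longrightarrow> t * x < 1"
proof -
  assume a: "0 \<le> t" "t \<le> 1" "0 < x" "x < 1"
  have "t * x \<le> 1 * x" using a by (intro mult_right_mono) auto
  then show ?thesis using a by linarith
qed

lemma geo_int:
  assumes x: "0 < x" "x < 1"
  shows "((\<lambda>t. x * t ^ n / (1 - t * x)) has_integral (\<Sum>k. x ^ Suc k / real (n + k + 1))) {0..1}
     \<and> summable (\<lambda>k. x ^ Suc k / real (n + k + 1))"
proof -
  define f where "f K t = (\<Sum>k<K. x ^ Suc k * t ^ (n + k))" for K t
  define G where "G t = x * t ^ n / (1 - t * x)" for t
  have fint: "(f K has_integral (\<Sum>k<K. x ^ Suc k / real (n + k + 1))) {0..1}" for K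
    unfolding f_def
    by (intro has_integral_sum) (auto intro!: has_integral_mult_right[of _ "1 / real (Suc (n + _))", simplified]
          poly_integral[of "n + _", simplified])
  have mono: "f K t \<le> f (Suc K) t" if "t \<in> {0..1}" for K t
    using that x unfolding f_def by simp
  have lim: "((\<lambda>K. f K t) \<longlongrightarrow> G t) sequentially" if "t \<in> {0..1}" for t
  proof -
    have "\<bar>x * t\<bar> < 1" using that x
      by (simp add: abs_mult) (metis abs_of_nonneg mult_less_le_imp_less mult.commute mult_1 zero_le_one
          order.strict_trans2 le_less abs_ge_zero)
    then have "(\<lambda>k. (x * t) ^ k) sums (1 / (1 - x * t))" using geometric_sums[of "x * t"] by simp
    then have "(\<lambda>k. x * t ^ n * (x * t) ^ k) sums (x * t ^ n * (1 / (1 - x * t)))"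
      by (rule sums_mult)
    moreover have "(\<lambda>k. x * t ^ n * (x * t) ^ k) = (\<lambda>k. x ^ Suc k * t ^ (n + k))"
      by (intro ext) (simp add: power_mult_distrib power_add algebra_simps)
    ultimately have "(\<lambda>k. x ^ Suc k * t ^ (n + k)) sums G t"
      unfolding G_def by (simp add: mult.commute)
    then show ?thesis unfolding sums_def f_def .
  qed
  have sgeo: "summable (\<lambda>k. x ^ k)" using x by (intro summable_geometric) simp
  have bnd: "(\<Sum>k<K. x ^ Suc k / real (n + k + 1)) \<le> (\<Sum>k. x ^ k)" for K
  proof -
    have "(\<Sum>k<K. x ^ Suc k / real (n + k + 1)) \<le> (\<Sum>k<K. x ^ k)"
    proof (intro sum_mono)
      fix k
      have "x ^ Suc k / real (n + k + 1) \<le> x ^ Suc k / 1" using x by (intro divide_left_mono) auto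
      also have "\<dots> \<le> x ^ k" using x by (simp add: mult_left_le_one_le)
      finally show "x ^ Suc k / real (n + k + 1) \<le> x ^ k" .
    qed
    also have "\<dots> \<le> (\<Sum>k. x ^ k)" using sgeo x by (intro sum_le_suminf) auto
    finally show ?thesis .
  qed
  have bou: "bounded (range (\<lambda>K. integral {0..1} (f K)))"
  proof -
    have ie: "integral {0..1} (f K) = (\<Sum>k<K. x ^ Suc k / real (n + k + 1))" for K
      using fint by (rule integral_unique)
    have "0 \<le> integral {0..1} (f K) \<and> integral {0..1} (f K) \<le> (\<Sum>k. x ^ k)" for K
      unfolding ie using bnd[of K] x by (auto intro!: sum_nonneg simp del: power_Suc)
    then have "range (\<lambda>K. integral {0..1} (f K)) \<subseteq> {0..(\<Sum>k. x ^ k)}" by auto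
    then show ?thesis by (metis bounded_closed_interval bounded_subset)
  qed
  have mc: "G integrable_on {0..1} \<and> ((\<lambda>K. integral {0..1} (f K)) \<longlongrightarrow> integral {0..1} G) sequentially"
    by (rule monotone_convergence_increasing) (use fint mono lim bou in \<open>auto simp: has_integral_integrable\<close>)
  have ie: "integral {0..1} (f K) = (\<Sum>k<K. x ^ Suc k / real (n + k + 1))" for K
    using fint by (rule integral_unique)
  have "(\<lambda>K. \<Sum>k<K. x ^ Suc k / real (n + k + 1)) \<longlonglongrightarrow> integral {0..1} G"
    using mc unfolding ie by blast
  then have "(\<lambda>k. x ^ Suc k / real (n + k + 1)) sums integral {0..1} G"
    unfolding sums_def .
  then show ?thesis using mc unfolding G_def by (auto simp: sums_iff integrable_integral)
qed

definition cn :: "real \<Rightarrow> nat \<Rightarrow> real" where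
  "cn x n = (\<Sum>k. x ^ Suc k / real (n + k + 1))"

lemma cn_nonneg: "0 < x \<Longrightarrow> x < 1 \<Longrightarrow> cn x n \<ge> 0"
  unfolding cn_def using geo_int by (intro suminf_nonneg) auto

lemma cn_bound: "0 < x \<Longrightarrow> x < 1 \<Longrightarrow> cn x n \<le> (x / (1 - x)) / real (Suc n)"
proof -
  assume x: "0 < x" "x < 1"
  have s: "summable (\<lambda>k. x ^ Suc k / real (Suc n))"
    using x by (intro summable_divide) (simp add: summable_geometric)
  have "cn x n \<le> (\<Sum>k. x ^ Suc k / real (Suc n))"
    unfolding cn_def using geo_int[OF x, of n] s x
    by (intro suminf_le) (auto intro!: divide_left_mono)
  also have "\<dots> = (\<Sum>k. x ^ Suc k) / real (Suc n)"
    using x by (intro suminf_divide) (simp add: summable_geometric)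
  also have "(\<Sum>k. x ^ Suc k) = x / (1 - x)"
  proof -
    have "(\<lambda>k. x * x ^ k) sums (x * (1 / (1 - x)))" using x by (intro sums_mult geometric_sums) simp
    then show ?thesis by (simp add: sums_iff)
  qed
  finally show ?thesis .
qed

lemma R_int0:
  assumes w: "wok w" and x: "0 < x" "x < 1"
  shows "((\<lambda>t. x * ps w t / (1 - t * x)) has_integral (\<Sum>n. cf w n * cn x n)) {0..1}
     \<and> summable (\<lambda>n. cf w n * cn x n)"
proof -
  have gi: "((\<lambda>t. x * t ^ n / (1 - t * x)) has_integral cn x n) {0..1}" for n
    using geo_int[OF x] unfolding cn_def by blast
  have sm: "summable (\<lambda>n. cf w n * cn x n)"
  proof (rule summable_comparison_test'[where N = 0])
    show "summable (\<lambda>n. (x / (1 - x)) * (cf w n / real (Suc n)))"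
      by (intro summable_mult summable_cf_div[OF w]) auto
    fix n :: nat
    have "cf w n * cn x n \<le> cf w n * ((x / (1 - x)) / real (Suc n))"
      using cn_bound[OF x] cf_nonneg by (intro mult_left_mono) auto
    moreover have "cf w n * ((x / (1 - x)) / real (Suc n)) = (x / (1 - x)) * (cf w n / real (Suc n))"
      by simp
    moreover have "norm (cf w n * cn x n) = cf w n * cn x n"
      using cf_nonneg[of w n] cn_nonneg[OF x, of n] by simp
    ultimately show "norm (cf w n * cn x n) \<le> (x / (1 - x)) * (cf w n / real (Suc n))"
      by linarith
  qed
  define F where "F M t = (\<Sum>n<M. cf w n * (x * t ^ n / (1 - t * x)))" for M t
  define f where "f M t = (if t < 1 then F M t else 0)" for M t
  define G where "G t = (if t < 1 then x * ps w t / (1 - t * x) else 0)" for t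
  have Fint: "(F M has_integral (\<Sum>n<M. cf w n * cn x n)) {0..1}" for M
    unfolding F_def by (intro has_integral_sum has_integral_mult_right gi) auto
  have fint: "(f M has_integral (\<Sum>n<M. cf w n * cn x n)) {0..1}" for M
    by (rule has_integral_spike_finite[OF _ _ Fint[of M], where S = "{1}"]) (auto simp: f_def)
  have mono: "f M t \<le> f (Suc M) t" if "t \<in> {0..1}" for M t
  proof -
    have "0 \<le> cf w M * (x * t ^ M / (1 - t * x))" if "t < 1"
      using that \<open>t \<in> {0..1}\<close> x cf_nonneg[of w M]
      by (intro mult_nonneg_nonneg divide_nonneg_pos) (auto intro!: tx_lt1)
    then show ?thesis unfolding f_def F_def by auto
  qed
  have lim: "((\<lambda>M. f M t) \<longlongrightarrow> G t) sequentially" if "t \<in> {0..1}" for t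
  proof (cases "t < 1")
    case True
    have tt: "\<bar>t\<bar> < 1" using True that by auto
    have "((\<lambda>M. (\<Sum>n<M. cf w n * t ^ n) * (x / (1 - t * x))) \<longlongrightarrow> ps w t * (x / (1 - t * x))) sequentially"
      unfolding ps_def by (intro tendsto_mult_right summable_LIMSEQ ps_summable[OF w tt])
    moreover have "(\<Sum>n<M. cf w n * t ^ n) * (x / (1 - t * x)) = f M t" for M
      using True unfolding f_def F_def
      by (simp add: sum_distrib_right sum_distrib_left sum_divide_distrib mult_ac)
    ultimately show ?thesis using True unfolding G_def by (simp add: mult.commute)
  next
    case False
    then show ?thesis unfolding f_def G_def by simp
  qed
  have conv: "((\<lambda>M. \<Sum>n<M. cf w n * cn x n) \<longlongrightarrow> (\<Sum>n. cf w n * cn x n)) sequentially"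
    using sm by (rule summable_LIMSEQ)
  have ieM: "integral {0..1} (f M) = (\<Sum>n<M. cf w n * cn x n)" for M
    using fint by (rule integral_unique)
  have bou: "bounded (range (\<lambda>M. integral {0..1} (f M)))"
    unfolding ieM by (rule convergent_imp_bounded[OF conv])
  have mc: "G integrable_on {0..1} \<and> ((\<lambda>M. integral {0..1} (f M)) \<longlongrightarrow> integral {0..1} G) sequentially"
    by (rule monotone_convergence_increasing) (use fint mono lim bou in \<open>auto simp: has_integral_integrable\<close>)
  then have "(\<lambda>M. \<Sum>n<M. cf w n * cn x n) \<longlonglongrightarrow> integral {0..1} G"
    unfolding ieM by blast
  then have "integral {0..1} G = (\<Sum>n. cf w n * cn x n)"
    using conv by (rule LIMSEQ_unique)
  then have hG: "(G has_integral (\<Sum>n. cf w n * cn x n)) {0..1}"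
    using mc by (metis integrable_integral)
  have "((\<lambda>t. x * ps w t / (1 - t * x)) has_integral (\<Sum>n. cf w n * cn x n)) {0..1}"
    by (rule has_integral_spike_finite[OF _ _ hG, where S = "{1}"]) (auto simp: G_def)
  then show ?thesis using sm by blast
qed



lemma partial_frac: "(n::real) > 0 \<Longrightarrow> N > 0 \<Longrightarrow> a / (n * (n + N)) = (a / n - a / (n + N)) / N"
proof -
  assume n: "n > 0" and N: "N > 0"
  have "a / n - a / (n + N) = a * N / (n * (n + N))"
    using n N by (simp add: divide_simps) (simp add: algebra_simps)
  then show ?thesis using N by simp
qed

lemma swap_sums:
  fixes c :: "nat \<Rightarrow> nat \<Rightarrow> real"
  assumes nn: "\<And>n k. c n k \<ge> 0" and rows: "\<And>n. (\<lambda>k. c n k) sums r n" and tot: "r sums S"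
  shows "(\<lambda>k. \<Sum>n. c n k) sums S"
proof -
  have hrow: "((\<lambda>k. c n k) has_sum r n) UNIV" for n
    using rows nn by (intro sums_nonneg_imp_has_sum) auto
  have rnn: "r n \<ge> 0" for n
    using rows[of n] nn by (metis sums_iff suminf_nonneg)
  have hr: "(r has_sum S) UNIV" using tot rnn by (intro sums_nonneg_imp_has_sum) auto
  have sm: "(\<lambda>(n,k). c n k) summable_on Sigma UNIV (\<lambda>_. UNIV)"
    by (rule summable_on_SigmaI[where g = r]) (use hrow hr nn in \<open>auto simp: summable_on_def\<close>)
  have hs: "((\<lambda>(n,k). c n k) has_sum S) (UNIV \<times> UNIV)"
    by (rule has_sum_SigmaI[where g = r]) (use hrow hr sm in auto)
  then have hs2: "((\<lambda>(k,n). c n k) has_sum S) (UNIV \<times> UNIV)"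
    using has_sum_swap[where f = "\<lambda>(n,k). c n k" and S = S and A = UNIV and B = UNIV] by (simp add: case_prod_unfold)
  have colsm: "(\<lambda>n. c n k) summable_on UNIV" for k
    using summable_on_SigmaD1[of "\<lambda>k n. c n k" UNIV "\<lambda>_. UNIV" k] hs2
    by (auto simp: summable_on_def)
  have hcol: "((\<lambda>n. c n k) has_sum (\<Sum>n. c n k)) UNIV" for k
    using colsm[of k] nn by (intro sums_nonneg_imp_has_sum summable_sums summable_on_imp_summable) auto
  have "((\<lambda>k. \<Sum>n. c n k) has_sum S) UNIV"
    by (rule has_sum_Sigma'[OF hs2]) (use hcol in auto)
  then show ?thesis by (rule has_sum_imp_sums)
qed

definition bb :: "nat list \<Rightarrow> nat \<Rightarrow> real" where
  "bb w N = (\<Sum>n. cf w n / real (n + N))"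

lemma summable_bb: "wok w \<Longrightarrow> summable (\<lambda>n. cf w n / real (n + N))"
  by (rule summable_cf_div) auto

lemma R_int:
  assumes w: "wok w" and x: "0 < x" "x < 1"
  shows "((\<lambda>t. x * ps w t / (1 - t * x)) has_integral (\<Sum>k. x ^ Suc k * bb w (Suc k))) {0..1}"
proof -
  have R0: "((\<lambda>t. x * ps w t / (1 - t * x)) has_integral (\<Sum>n. cf w n * cn x n)) {0..1}"
    and sm: "summable (\<lambda>n. cf w n * cn x n)" using R_int0[OF w x] by auto
  define c where "c n k = cf w n * (x ^ Suc k / real (n + k + 1))" for n k
  have nn: "c n k \<ge> 0" for n k unfolding c_def using x cf_nonneg by auto
  have rows: "(\<lambda>k. c n k) sums (cf w n * cn x n)" for n
    unfolding c_def cn_def using geo_int[OF x, of n] by (intro sums_mult summable_sums) auto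
  have "(\<lambda>k. \<Sum>n. c n k) sums (\<Sum>n. cf w n * cn x n)"
    by (rule swap_sums[OF nn rows]) (use sm in \<open>simp add: summable_sums\<close>)
  moreover have "(\<Sum>n. c n k) = x ^ Suc k * bb w (Suc k)" for k
  proof -
    have "(\<lambda>n. c n k) = (\<lambda>n. x ^ Suc k * (cf w n / real (n + Suc k)))"
      unfolding c_def by (intro ext) (simp add: field_simps)
    then show ?thesis unfolding bb_def using suminf_mult[OF summable_bb[OF w, of "Suc k"]] by simp
  qed
  ultimately have "(\<Sum>n. cf w n * cn x n) = (\<Sum>k. x ^ Suc k * bb w (Suc k))"
    by (simp add: sums_iff)
  then show ?thesis using R0 by simp
qed

lemma bb_Nil: "N \<ge> 1 \<Longrightarrow> bb [] N = cf [1] N"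
proof -
  assume N: "N \<ge> 1"
  have "(\<lambda>n. cf [] n / real (n + N)) = (\<lambda>n. if n = 0 then 1 / real N else 0)"
    by (intro ext) (simp add: cf_Nil)
  moreover have "(\<lambda>n::nat. if n = 0 then 1 / real N else 0) sums (1 / real N)"
    using sums_single[of 0 "\<lambda>_. 1 / real N"] by simp
  ultimately have "bb [] N = 1 / real N" unfolding bb_def by (simp add: sums_iff)
  moreover have "cf [1] N = 1 / real N" unfolding cf_Cons1 using N by (simp add: cf_Nil)
  ultimately show ?thesis by simp
qed

lemma bb_Cons0:
  assumes w: "wok w" "w \<noteq> []" and N: "N \<ge> 1"
  shows "bb (0 # w) N = ((\<Sum>n. cf (0 # w) n) - bb w N) / real N"
proof -
  have e: "cf (0 # w) n / real (n + N) = (cf (0 # w) n - cf w n / real (n + N)) / real N" for n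
  proof (cases "n = 0")
    case True
    then show ?thesis using cf_0[OF w] cf_Cons0[OF w, of 0] by simp
  next
    case False
    have "real n > 0" "real N > 0" using N False by auto
    then have "cf w n / (real n * (real n + real N)) = (cf w n / real n - cf w n / (real n + real N)) / real N"
      by (rule partial_frac)
    then show ?thesis unfolding cf_Cons0[OF w] by simp
  qed
  have "cf (0 # w) = (\<lambda>n. cf w n / real n)" using cf_Cons0[OF w] by (intro ext) simp
  then have s1: "summable (cf (0 # w))"
    using summable_cf_div[OF w(1), of real] by simp
  have "bb (0 # w) N = (\<Sum>n. (cf (0 # w) n - cf w n / real (n + N)) / real N)"
    unfolding bb_def e ..
  also have "\<dots> = (\<Sum>n. cf (0 # w) n - cf w n / real (n + N)) / real N"
    by (rule suminf_divide) (intro summable_diff s1 summable_bb w)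
  also have "(\<Sum>n. cf (0 # w) n - cf w n / real (n + N)) = (\<Sum>n. cf (0 # w) n) - bb w N"
    unfolding bb_def using suminf_diff[OF s1 summable_bb[OF w(1)]] by simp
  finally show ?thesis .
qed

lemma mzv_cf0:
  assumes w: "wok w" "w \<noteq> []"
  shows "(\<Sum>n. cf (0 # w) n) \<in> Sp (Suc (length w))"
proof -
  have adm: "admissible (idx (0 # w))" by (rule adm_idx0[OF w])
  have ne: "idx (0 # w) \<noteq> []" using idx_ne[OF wok_Cons0[OF w]] by simp
  have "(\<Sum>n. cf (0 # w) n) = mzv (idx (0 # w))"
    unfolding cf_def[abs_def] using mzv_eq_suminf[OF summable_A_adm[OF adm ne]] by simp
  moreover have "sum_list (idx (0 # w)) = Suc (length w)"
    using sum_idx[OF wok_Cons0[OF w]] by simp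
  ultimately show ?thesis using Sp_mzv[OF adm] by simp
qed

lemma telescope_gap:
  fixes f :: "nat \<Rightarrow> real"
  assumes "f \<longlonglongrightarrow> 0"
  shows "(\<lambda>i. f i - f (i + N)) sums (\<Sum>i<N. f i)"
proof -
  have "(\<lambda>i. f (i + j) - f (Suc (i + j))) sums f j" for j
  proof -
    have "(\<lambda>i. f (i + j)) \<longlonglongrightarrow> 0" using assms by (rule LIMSEQ_ignore_initial_segment)
    from telescope_sums'[OF this] show ?thesis by simp
  qed
  then have "(\<lambda>i. \<Sum>j<N. f (i + j) - f (Suc (i + j))) sums (\<Sum>j<N. f j)"
    by (intro sums_sum)
  moreover have "(\<Sum>j<N. f (i + j) - f (Suc (i + j))) = f i - f (i + N)" for i
    using sum_lessThan_telescope'[of "\<lambda>j. f (i + j)" N] by simp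
  ultimately show ?thesis by simp
qed

lemma tele_sum:
  assumes N: "N \<ge> 1"
  shows "(\<lambda>n. if m < n then 1 / (real n * real (n + N)) else 0) sums ((\<Sum>i<N. 1 / real (m + Suc i)) / real N)"
proof -
  define F where "F i = 1 / real (i + Suc m)" for i
  have F0: "F \<longlonglongrightarrow> 0"
    unfolding F_def using LIMSEQ_ignore_initial_segment[OF lim_1_over_n, of "Suc m"] by simp
  have "(\<lambda>i. F i - F (i + N)) sums (\<Sum>i<N. F i)" by (rule telescope_gap[OF F0])
  then have "(\<lambda>i. (F i - F (i + N)) / real N) sums ((\<Sum>i<N. F i) / real N)"
    by (rule sums_divide)
  moreover have "(F i - F (i + N)) / real N = (if m < i + Suc m then 1 / (real (i + Suc m) * real (i + Suc m + N)) else 0)" for i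
  proof -
    have "1 / (real (i + Suc m) * (real (i + Suc m) + real N)) = (1 / real (i + Suc m) - 1 / (real (i + Suc m) + real N)) / real N"
      using N by (intro partial_frac) auto
    then show ?thesis unfolding F_def by (simp add: add.assoc)
  qed
  moreover have "(\<Sum>i<N. F i) = (\<Sum>i<N. 1 / real (m + Suc i))"
    unfolding F_def by (simp add: add.commute)
  ultimately have "(\<lambda>i. (\<lambda>n. if m < n then 1 / (real n * real (n + N)) else 0) (i + Suc m)) sums ((\<Sum>i<N. 1 / real (m + Suc i)) / real N)"
    by simp
  then show ?thesis
    by (subst (asm) sums_iff_shift) simp
qed

lemma bb_Cons1:
  assumes w: "wok w" and N: "N \<ge> 1"
  shows "bb (1 # w) N = (\<Sum>i<N. bb w (Suc i)) / real N"
proof -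
  define c where "c n m = (if m < n then cf w m / (real n * real (n + N)) else 0)" for n m
  have nn: "c n m \<ge> 0" for n m unfolding c_def using cf_nonneg by auto
  have rows: "(\<lambda>m. c n m) sums (cf (1 # w) n / real (n + N))" for n
  proof -
    have "(\<lambda>m. c n m) sums (\<Sum>m\<in>{..<n}. c n m)"
      by (rule sums_finite) (auto simp: c_def)
    moreover have "(\<Sum>m\<in>{..<n}. c n m) = cf (1 # w) n / real (n + N)"
      unfolding c_def cf_Cons1 by (simp add: sum_divide_distrib)
    ultimately show ?thesis by simp
  qed
  have tot: "(\<lambda>n. cf (1 # w) n / real (n + N)) sums bb (1 # w) N"
    unfolding bb_def using summable_bb[OF wok_Cons1[OF w]] by (rule summable_sums)
  have "(\<lambda>m. \<Sum>n. c n m) sums bb (1 # w) N"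
    by (rule swap_sums[OF nn rows tot])
  moreover have "(\<Sum>n. c n m) = (\<Sum>i<N. cf w m / real (m + Suc i)) / real N" for m
  proof -
    have "(\<lambda>n. c n m) = (\<lambda>n. cf w m * (if m < n then 1 / (real n * real (n + N)) else 0))"
      unfolding c_def by auto
    moreover have "(\<lambda>n. cf w m * (if m < n then 1 / (real n * real (n + N)) else 0)) sums
        (cf w m * ((\<Sum>i<N. 1 / real (m + Suc i)) / real N))"
      by (intro sums_mult tele_sum N)
    ultimately show ?thesis by (simp add: sums_iff sum_distrib_left)
  qed
  moreover have "(\<lambda>m. (\<Sum>i<N. cf w m / real (m + Suc i)) / real N) sums ((\<Sum>i<N. bb w (Suc i)) / real N)"
    unfolding bb_def by (intro sums_divide sums_sum summable_sums) (rule summable_bb[OF w])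
  ultimately show ?thesis by (simp add: sums_iff)
qed

lemma cf01: "wok v \<Longrightarrow> v \<noteq> [] \<Longrightarrow> N \<ge> 1 \<Longrightarrow> cf (0 # v) N + cf (1 # v) N = (\<Sum>i<N. cf v (Suc i)) / real N"
proof -
  assume v: "wok v" "v \<noteq> []" and N: "N \<ge> 1"
  have "(\<Sum>i<Suc N. cf v i) = (\<Sum>i<N. cf v (Suc i)) + cf v 0"
    by (rule sum.lessThan_Suc_shift[THEN trans]) simp
  then have "cf v N + (\<Sum>k<N. cf v k) = (\<Sum>i<N. cf v (Suc i))"
    using cf_0[OF v] by simp
  then show ?thesis unfolding cf_Cons0[OF v] cf_Cons1 using N by (simp add: add_divide_distrib[symmetric])
qed



definition W :: "nat \<Rightarrow> nat list set" where
  "W k = {u. wok u \<and> u \<noteq> [] \<and> length u \<le> k}"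

lemma W_0: "W 0 = {}"
  by (auto simp: W_def)

lemma W_Suc: "W (Suc k) = insert [1] (Cons 0 ` W k \<union> Cons 1 ` W k)"
proof (intro set_eqI iffI)
  fix u assume "u \<in> W (Suc k)"
  then obtain c v where u: "u = c # v" "wok (c # v)" "length v \<le> k"
    unfolding W_def by (cases u) auto
  from wok_ConsD[OF u(2)] have v: "wok v" "c = 0 \<or> c = 1" "v = [] \<longrightarrow> c = 1" by auto
  show "u \<in> insert [1] (Cons 0 ` W k \<union> Cons 1 ` W k)"
  proof (cases "v = []")
    case True then show ?thesis using u v by auto
  next
    case False
    then have "v \<in> W k" using v u unfolding W_def by auto
    then show ?thesis using u v by auto
  qed
next
  fix u assume "u \<in> insert [1] (Cons 0 ` W k \<union> Cons 1 ` W k)"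
  then show "u \<in> W (Suc k)"
    unfolding W_def using wok_Cons0 wok_Cons1 by (auto simp: wok_def)
qed

lemma finite_W: "finite (W k)"
proof -
  have "W k \<subseteq> {u. set u \<subseteq> {0,1} \<and> length u \<le> k}" unfolding W_def wok_def by auto
  moreover have "finite {u::nat list. set u \<subseteq> {0,1} \<and> length u \<le> k}"
    by (rule finite_lists_length_le) simp
  ultimately show ?thesis by (rule finite_subset)
qed

lemma W_mono: "k \<le> k' \<Longrightarrow> W k \<subseteq> W k'"
  unfolding W_def by auto

lemma W_1: "W (Suc 0) = {[1]}"
  using W_Suc[of 0] by (simp add: W_0)

lemma sum_W_Suc: "(\<Sum>u\<in>W (Suc k). f u) = f [1] + (\<Sum>v\<in>W k. f (0 # v)) + (\<Sum>v\<in>W k. f (1 # v))"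
proof -
  have nil: "[] \<notin> W k" unfolding W_def by auto
  have "[1] \<notin> Cons 0 ` W k \<union> Cons 1 ` W k" using nil by auto
  then have "(\<Sum>u\<in>W (Suc k). f u) = f [1] + (\<Sum>u\<in>Cons 0 ` W k \<union> Cons 1 ` W k. f u)"
    unfolding W_Suc by (simp add: finite_W)
  also have "(\<Sum>u\<in>Cons 0 ` W k \<union> Cons 1 ` W k. f u) = (\<Sum>u\<in>Cons 0 ` W k. f u) + (\<Sum>u\<in>Cons 1 ` W k. f u)"
    by (rule sum.union_disjoint) (auto simp: finite_W)
  also have "(\<Sum>u\<in>Cons 0 ` W k. f u) = (\<Sum>v\<in>W k. f (0 # v))"
    by (simp add: sum.reindex)
  also have "(\<Sum>u\<in>Cons 1 ` W k. f u) = (\<Sum>v\<in>W k. f (1 # v))"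
    by (simp add: sum.reindex)
  finally show ?thesis by (simp add: add.assoc)
qed

lemma W_wok: "u \<in> W k \<Longrightarrow> wok u \<and> u \<noteq> [] \<and> length u \<le> k"
  by (simp add: W_def)

lemma key:
  assumes "wok w"
  shows "\<exists>\<gamma>. (\<forall>u\<in>W (Suc (length w)). \<gamma> u \<in> Sp (Suc (length w) - length u)) \<and>
             (\<forall>N\<ge>1. bb w N = (\<Sum>u\<in>W (Suc (length w)). \<gamma> u * cf u N))"
  using assms
proof (induction w)
  case Nil
  show ?case
    by (rule exI[of _ "\<lambda>_. 1"]) (auto simp: W_1 Sp_one bb_Nil)
next
  case (Cons c w)
  have w: "wok w" "c = 0 \<or> c = 1" "w = [] \<longrightarrow> c = 1" using wok_ConsD[OF Cons.prems] by auto
  define k where "k = Suc (length w)"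
  obtain \<gamma> where g1: "\<forall>u\<in>W k. \<gamma> u \<in> Sp (k - length u)"
    and g2: "\<forall>N\<ge>1. bb w N = (\<Sum>u\<in>W k. \<gamma> u * cf u N)"
    using Cons.IH[OF w(1)] unfolding k_def by blast
  have kk: "Suc (length (c # w)) = Suc k" by (simp add: k_def)
  show ?case
  proof (cases "c = 0")
    case True
    then have wne: "w \<noteq> []" using w by auto
    define C where "C = (\<Sum>n. cf (0 # w) n)"
    have C: "C \<in> Sp k" unfolding C_def k_def by (rule mzv_cf0[OF w(1) wne])
    define \<gamma>' where "\<gamma>' u = (if u = [1] then C else if hd u = 0 then - \<gamma> (tl u) else 0)" for u
    have wt: "\<forall>u\<in>W (Suc k). \<gamma>' u \<in> Sp (Suc k - length u)"
    proof
      fix u assume "u \<in> W (Suc k)"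
      then consider "u = [1]" | v where "v \<in> W k" "u = 0 # v" | v where "v \<in> W k" "u = 1 # v"
        unfolding W_Suc by blast
      then show "\<gamma>' u \<in> Sp (Suc k - length u)"
      proof cases
        case 1 then show ?thesis using C by (simp add: \<gamma>'_def)
      next
        case 2
        then have "v \<noteq> []" using W_wok by blast
        then show ?thesis using 2 g1 by (auto simp: \<gamma>'_def intro: Sp_neg)
      next
        case 3
        then have "v \<noteq> []" using W_wok by blast
        then show ?thesis using 3 by (auto simp: \<gamma>'_def Sp_0)
      qed
    qed
    have eq: "bb (c # w) N = (\<Sum>u\<in>W (Suc k). \<gamma>' u * cf u N)" if N: "N \<ge> 1" for N
    proof -
      have nn: "v \<noteq> []" if "v \<in> W k" for v using that W_wok by blast
      have "(\<Sum>u\<in>W (Suc k). \<gamma>' u * cf u N) = C * cf [1] N + (\<Sum>v\<in>W k. - \<gamma> v * cf (0 # v) N)"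
        unfolding sum_W_Suc using nn by (simp add: \<gamma>'_def)
      also have "cf [1] N = 1 / real N" unfolding cf_Cons1 using N by (simp add: cf_Nil)
      also have "(\<Sum>v\<in>W k. - \<gamma> v * cf (0 # v) N) = - (\<Sum>v\<in>W k. \<gamma> v * cf v N) / real N"
        using W_wok by (simp add: cf_Cons0 sum_negf sum_divide_distrib)
      also have "(\<Sum>v\<in>W k. \<gamma> v * cf v N) = bb w N" using g2 N by simp
      finally have "(\<Sum>u\<in>W (Suc k). \<gamma>' u * cf u N) = (C - bb w N) / real N"
        by (simp add: diff_divide_distrib)
      then show ?thesis using True bb_Cons0[OF w(1) wne N] unfolding C_def by simp
    qed
    show ?thesis unfolding kk using wt eq by blast
  next
    case False
    then have c1: "c = 1" using w by auto
    define \<gamma>' where "\<gamma>' u = (if u = [1] then 0 else \<gamma> (tl u))" for u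
    have wt: "\<forall>u\<in>W (Suc k). \<gamma>' u \<in> Sp (Suc k - length u)"
    proof
      fix u assume "u \<in> W (Suc k)"
      then consider "u = [1]" | v where "v \<in> W k" "u = 0 # v" | v where "v \<in> W k" "u = 1 # v"
        unfolding W_Suc by blast
      then show "\<gamma>' u \<in> Sp (Suc k - length u)"
      proof cases
        case 1 then show ?thesis by (simp add: \<gamma>'_def Sp_0)
      next
        case 2
        then have "v \<noteq> []" using W_wok by blast
        then show ?thesis using 2 g1 by (auto simp: \<gamma>'_def)
      next
        case 3
        then have "v \<noteq> []" using W_wok by blast
        then show ?thesis using 3 g1 by (auto simp: \<gamma>'_def)
      qed
    qed
    have eq: "bb (c # w) N = (\<Sum>u\<in>W (Suc k). \<gamma>' u * cf u N)" if N: "N \<ge> 1" for N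
    proof -
      have nn: "v \<noteq> []" if "v \<in> W k" for v using that W_wok by blast
      have "(\<Sum>u\<in>W (Suc k). \<gamma>' u * cf u N) = (\<Sum>v\<in>W k. \<gamma> v * (cf (0 # v) N + cf (1 # v) N))"
        unfolding sum_W_Suc using nn by (simp add: \<gamma>'_def sum.distrib algebra_simps)
      also have "\<dots> = (\<Sum>v\<in>W k. \<gamma> v * ((\<Sum>i<N. cf v (Suc i)) / real N))"
        by (intro sum.cong refl) (use W_wok cf01 N in auto)
      also have "\<dots> = (\<Sum>i<N. (\<Sum>v\<in>W k. \<gamma> v * cf v (Suc i))) / real N"
        by (simp add: sum_divide_distrib sum_distrib_left sum.swap[of _ "W k"])
      also have "\<dots> = (\<Sum>i<N. bb w (Suc i)) / real N"
        using g2 by simp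
      also have "\<dots> = bb (c # w) N" using bb_Cons1[OF w(1) N] c1 by simp
      finally show ?thesis by simp
    qed
    show ?thesis unfolding kk using wt eq by blast
  qed
qed



lemma ps_shift: "wok u \<Longrightarrow> \<bar>x\<bar> < 1 \<Longrightarrow> u \<noteq> [] \<Longrightarrow>
   summable (\<lambda>k. cf u (Suc k) * x ^ Suc k) \<and> (\<Sum>k. cf u (Suc k) * x ^ Suc k) = ps u x"
proof -
  assume u: "wok u" "\<bar>x\<bar> < 1" "u \<noteq> []"
  have s: "summable (\<lambda>k. cf u k * x ^ k)" by (rule ps_summable[OF u(1,2)])
  then have "summable (\<lambda>k. cf u (Suc k) * x ^ Suc k)"
    using summable_Suc_iff[of "\<lambda>k. cf u k * x ^ k"] by simp
  moreover have "(\<Sum>k. cf u (Suc k) * x ^ Suc k) = ps u x"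
    using suminf_split_head[OF s] cf_0[OF u(1,3)] unfolding ps_def by simp
  ultimately show ?thesis by blast
qed

lemma key2:
  assumes w: "wok w"
  shows "\<exists>\<gamma>. (\<forall>u\<in>W (Suc (length w)). \<gamma> u \<in> Sp (Suc (length w) - length u)) \<and>
             (\<forall>x. 0 < x \<and> x < 1 \<longrightarrow> ((\<lambda>t. x * ps w t / (1 - t * x)) has_integral
                 (\<Sum>u\<in>W (Suc (length w)). \<gamma> u * ps u x)) {0..1})"
proof -
  define K where "K = W (Suc (length w))"
  obtain \<gamma> where g1: "\<forall>u\<in>K. \<gamma> u \<in> Sp (Suc (length w) - length u)"
    and g2: "\<forall>N\<ge>1. bb w N = (\<Sum>u\<in>K. \<gamma> u * cf u N)"
    using key[OF w] unfolding K_def by blast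
  have "((\<lambda>t. x * ps w t / (1 - t * x)) has_integral (\<Sum>u\<in>K. \<gamma> u * ps u x)) {0..1}"
    if x: "0 < x" "x < 1" for x
  proof -
    have xx: "\<bar>x\<bar> < 1" using x by simp
    have "(\<Sum>k. x ^ Suc k * bb w (Suc k)) = (\<Sum>k. \<Sum>u\<in>K. \<gamma> u * (cf u (Suc k) * x ^ Suc k))"
      using g2 by (simp add: sum_distrib_left mult_ac)
    also have "\<dots> = (\<Sum>u\<in>K. \<Sum>k. \<gamma> u * (cf u (Suc k) * x ^ Suc k))"
      by (rule suminf_sum) (use ps_shift[OF _ xx] W_wok in \<open>auto simp: K_def intro!: summable_mult\<close>)
    also have "\<dots> = (\<Sum>u\<in>K. \<gamma> u * ps u x)"
    proof (intro sum.cong refl)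
      fix u assume "u \<in> K"
      then have u: "wok u" "u \<noteq> []" using W_wok unfolding K_def by auto
      show "(\<Sum>k. \<gamma> u * (cf u (Suc k) * x ^ Suc k)) = \<gamma> u * ps u x"
        using ps_shift[OF u(1) xx u(2)] suminf_mult[of "\<lambda>k. cf u (Suc k) * x ^ Suc k" "\<gamma> u"] by simp
    qed
    finally show ?thesis using R_int[OF w x] by simp
  qed
  then show ?thesis using g1 unfolding K_def by blast
qed

lemma ps_one: "0 < x \<Longrightarrow> x < 1 \<Longrightarrow> ps [1] x = - ln (1 - x)"
proof -
  assume x: "0 < x" "x < 1"
  have "hyperlog (map real [1]) x = ps [1] x"
    using x by (intro hyperlog_ps) (auto simp: wok_def)
  moreover have "hyperlog (map real [1]) x = integral {0..x} (\<lambda>t. 1 / (1 - t))"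
    by simp
  moreover have "((\<lambda>t. 1 / (1 - t)) has_integral (- ln (1 - x) - - ln (1 - 0))) {0..x}"
  proof (rule fundamental_theorem_of_calculus)
    fix t assume t: "t \<in> {0..x}"
    then have t1: "t < 1" using x by auto
    have "((\<lambda>t. - ln (1 - t)) has_real_derivative (1 / (1 - t))) (at t within {0..x})"
      by (rule derivative_eq_intros refl | use t1 in simp)+
    then show "((\<lambda>t. - ln (1 - t)) has_vector_derivative (1 / (1 - t))) (at t within {0..x})"
      by (simp add: has_real_derivative_iff_has_vector_derivative)
  qed (use x in simp)
  ultimately show ?thesis by (simp add: integral_unique)
qed

lemma main_inv:
  assumes "l \<ge> 2"
  shows "\<exists>\<beta>. (\<forall>u\<in>W (l - 1). \<beta> u \<in> Sp (l - 1 - length u)) \<and>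
     (\<forall>x. 0 < x \<and> x < 1 \<longrightarrow> g l x = (if even l then 1 / x else 1) * (\<Sum>u\<in>W (l - 1). \<beta> u * ps u x))"
  using assms
proof (induction l rule: nat_induct_at_least)
  case base
  have "g 2 x = 1 / x * (\<Sum>u\<in>W (2 - 1). 1 * ps u x)" if "0 < x" "x < 1" for x
    using ps_one[OF that] by (simp add: numeral_2_eq_2 W_1)
  moreover have "(\<forall>u\<in>W (2 - 1). (1::real) \<in> Sp (2 - 1 - length u))"
    by (simp add: numeral_2_eq_2 W_1 Sp_one)
  ultimately show ?case by (intro exI[of _ "\<lambda>_. 1"]) auto
next
  case (Suc l)
  obtain \<beta> where b1: "\<forall>u\<in>W (l - 1). \<beta> u \<in> Sp (l - 1 - length u)"
    and b2: "\<forall>x. 0 < x \<and> x < 1 \<longrightarrow> g l x = (if even l then 1 / x else 1) * (\<Sum>u\<in>W (l - 1). \<beta> u * ps u x)"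
    using Suc.IH by blast
  define K where "K = W (l - 1)"
  have "\<forall>u\<in>K. \<exists>\<gamma>. (\<forall>v\<in>W (Suc (length u)). \<gamma> v \<in> Sp (Suc (length u) - length v)) \<and>
             (\<forall>x. 0 < x \<and> x < 1 \<longrightarrow> ((\<lambda>t. x * ps u t / (1 - t * x)) has_integral
                 (\<Sum>v\<in>W (Suc (length u)). \<gamma> v * ps v x)) {0..1})"
    using key2 W_wok unfolding K_def by blast
  from bchoice[OF this] obtain GG where GG: "\<forall>u\<in>K. (\<forall>v\<in>W (Suc (length u)). GG u v \<in> Sp (Suc (length u) - length v)) \<and>
             (\<forall>x. 0 < x \<and> x < 1 \<longrightarrow> ((\<lambda>t. x * ps u t / (1 - t * x)) has_integral
                 (\<Sum>v\<in>W (Suc (length u)). GG u v * ps v x)) {0..1})"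
    by (elim exE) (rule that)
  have GG1: "\<And>u v. u \<in> K \<Longrightarrow> v \<in> W (Suc (length u)) \<Longrightarrow> GG u v \<in> Sp (Suc (length u) - length v)"
    using GG by blast
  have GG2: "\<And>u x. u \<in> K \<Longrightarrow> 0 < x \<Longrightarrow> x < 1 \<Longrightarrow> ((\<lambda>t. x * ps u t / (1 - t * x)) has_integral
                 (\<Sum>v\<in>W (Suc (length u)). GG u v * ps v x)) {0..1}"
    using GG by blast
  define \<beta>' where "\<beta>' v = (\<Sum>u\<in>K. \<beta> u * (if v \<in> W (Suc (length u)) then GG u v else 0))" for v
  define P where "P t = (\<Sum>u\<in>K. \<beta> u * ps u t)" for t
  have lenK: "length u \<le> l - 1" if "u \<in> K" for u using that W_wok unfolding K_def by blast
  have sub: "W (Suc (length u)) \<subseteq> W l" if "u \<in> K" for u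
    using lenK[OF that] Suc.hyps by (intro W_mono) auto
  have int: "((\<lambda>t. x * P t / (1 - t * x)) has_integral (\<Sum>v\<in>W l. \<beta>' v * ps v x)) {0..1}"
    if x: "0 < x" "x < 1" for x
  proof -
    have "((\<lambda>t. \<Sum>u\<in>K. \<beta> u * (x * ps u t / (1 - t * x))) has_integral
            (\<Sum>u\<in>K. \<beta> u * (\<Sum>v\<in>W (Suc (length u)). GG u v * ps v x))) {0..1}"
      by (intro has_integral_sum has_integral_mult_right GG2 x) (auto simp: K_def finite_W)
    moreover have "(\<lambda>t. \<Sum>u\<in>K. \<beta> u * (x * ps u t / (1 - t * x))) = (\<lambda>t. x * P t / (1 - t * x))"
      unfolding P_def by (intro ext) (simp add: sum_distrib_left sum_divide_distrib mult_ac)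
    moreover have "(\<Sum>u\<in>K. \<beta> u * (\<Sum>v\<in>W (Suc (length u)). GG u v * ps v x)) = (\<Sum>v\<in>W l. \<beta>' v * ps v x)"
    proof -
      have "(\<Sum>v\<in>W (Suc (length u)). GG u v * ps v x) =
            (\<Sum>v\<in>W l. (if v \<in> W (Suc (length u)) then GG u v else 0) * ps v x)" if "u \<in> K" for u
      proof -
        have "(\<Sum>v\<in>W l. (if v \<in> W (Suc (length u)) then GG u v else 0) * ps v x) =
              (\<Sum>v\<in>W l. (if v \<in> W (Suc (length u)) then GG u v * ps v x else 0))"
          by (intro sum.cong refl) auto
        also have "\<dots> = (\<Sum>v\<in>W l \<inter> W (Suc (length u)). GG u v * ps v x)"
          by (rule sum.inter_restrict[OF finite_W, symmetric])
        also have "W l \<inter> W (Suc (length u)) = W (Suc (length u))" using sub[OF that] by blast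
        finally show ?thesis by simp
      qed
      then have "(\<Sum>u\<in>K. \<beta> u * (\<Sum>v\<in>W (Suc (length u)). GG u v * ps v x)) =
          (\<Sum>u\<in>K. \<beta> u * (\<Sum>v\<in>W l. (if v \<in> W (Suc (length u)) then GG u v else 0) * ps v x))"
        by (intro sum.cong refl) simp
      also have "\<dots> = (\<Sum>v\<in>W l. \<beta>' v * ps v x)"
        unfolding \<beta>'_def by (simp add: sum_distrib_left sum_distrib_right sum.swap[of _ K] mult_ac)
      finally show ?thesis .
    qed
    ultimately show ?thesis by simp
  qed
  have wt: "\<forall>v\<in>W (Suc l - 1). \<beta>' v \<in> Sp (Suc l - 1 - length v)"
  proof
    fix v assume v: "v \<in> W (Suc l - 1)"
    show "\<beta>' v \<in> Sp (Suc l - 1 - length v)"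
      unfolding \<beta>'_def
    proof (rule Sp_sum)
      show "finite K" by (simp add: K_def finite_W)
      fix u assume u: "u \<in> K"
      show "\<beta> u * (if v \<in> W (Suc (length u)) then GG u v else 0) \<in> Sp (Suc l - 1 - length v)"
      proof (cases "v \<in> W (Suc (length u))")
        case True
        have lv: "length v \<le> Suc (length u)" using True W_wok by blast
        have "\<beta> u * GG u v \<in> Sp ((l - 1 - length u) + (Suc (length u) - length v))"
          using b1 u GG1[OF u True] unfolding K_def by (intro Sp_mult) auto
        moreover have "(l - 1 - length u) + (Suc (length u) - length v) = Suc l - 1 - length v"
          using lenK[OF u] lv Suc.hyps by linarith
        ultimately show ?thesis using True by simp
      next
        case False
        then show ?thesis by (simp add: Sp_0)
      qed
    qed
  qed
  obtain n where ln: "l = Suc (Suc n)" using Suc.hyps by (metis add_2_eq_Suc le_Suc_ex)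
  have geq: "g (Suc l) x = (if even (Suc l) then 1 / x else 1) * (\<Sum>v\<in>W (Suc l - 1). \<beta>' v * ps v x)"
    if x: "0 < x" "x < 1" for x
  proof (cases "even l")
    case True
    have "((\<lambda>t. t * x * g l t / (1 - t * x)) has_integral (\<Sum>v\<in>W l. \<beta>' v * ps v x)) {0..1}"
    proof (rule has_integral_spike_finite[OF _ _ int[OF x], where S = "{0,1}"])
      fix t :: real assume t: "t \<in> {0..1} - {0,1}"
      then have "g l t = 1 / t * P t" using b2 True unfolding P_def K_def by auto
      then show "t * x * g l t / (1 - t * x) = x * P t / (1 - t * x)" using t by auto
    qed simp
    then have "g (Suc l) x = (\<Sum>v\<in>W l. \<beta>' v * ps v x)"
      using True unfolding ln by (simp add: integral_unique)
    then show ?thesis using True by simp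
  next
    case False
    have "((\<lambda>t. 1 / x * (x * P t / (1 - t * x))) has_integral (1 / x * (\<Sum>v\<in>W l. \<beta>' v * ps v x))) {0..1}"
      by (rule has_integral_mult_right[OF int[OF x]])
    then have "((\<lambda>t. g l t / (1 - t * x)) has_integral (1 / x * (\<Sum>v\<in>W l. \<beta>' v * ps v x))) {0..1}"
    proof (rule has_integral_spike_finite[where S = "{0,1}", rotated 2])
      fix t :: real assume t: "t \<in> {0..1} - {0,1}"
      then have "g l t = P t" using b2 False unfolding P_def K_def by auto
      then show "g l t / (1 - t * x) = 1 / x * (x * P t / (1 - t * x))" using x by auto
    qed simp
    then have "g (Suc l) x = 1 / x * (\<Sum>v\<in>W l. \<beta>' v * ps v x)"
      using False unfolding ln by (simp add: integral_unique)
    then show ?thesis using False by simp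
  qed
  show ?case using wt geq by blast
qed

lemma W_Iw: "W k = (\<Union>m\<in>{1..k}. Iw m)"
  unfolding W_def Iw_def wok_def by (auto simp: Suc_le_eq)

lemma sum_Iw: "(\<Sum>m=1..k. \<Sum>i\<in>Iw m. f i) = (\<Sum>i\<in>W k. f i)"
proof -
  have fin: "finite (Iw m)" for m
    using finite_W[of m] by (rule finite_subset[rotated]) (auto simp: W_def Iw_def wok_def)
  have disj: "\<forall>i\<in>{1..k}. \<forall>j\<in>{1..k}. i \<noteq> j \<longrightarrow> Iw i \<inter> Iw j = {}"
    by (auto simp: Iw_def)
  show ?thesis unfolding W_Iw
    by (rule sum.UNION_disjoint[symmetric]) (use fin disj in auto)
qed

theorem mainTheorem2:
  fixes l :: nat
  assumes "l \<ge> 2"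
  shows "\<exists>\<alpha> :: nat list \<Rightarrow> complex.
    (\<forall>m\<in>{1..l-1}. \<forall>i\<in>Iw m. \<alpha> i \<in> mzv_span (l - 1 - m)) \<and>
    (\<forall>x::real. 0 < x \<and> x < 1 \<longrightarrow>
       complex_of_real (g l x) =
         (if even l then 1 / complex_of_real x else 1) *
         (\<Sum>m=1..l-1. \<Sum>i\<in>Iw m. \<alpha> i * complex_of_real (hyperlog (map real i) x)))"
proof -
  obtain \<beta> where b1: "\<forall>u\<in>W (l - 1). \<beta> u \<in> Sp (l - 1 - length u)"
    and b2: "\<forall>x. 0 < x \<and> x < 1 \<longrightarrow> g l x = (if even l then 1 / x else 1) * (\<Sum>u\<in>W (l - 1). \<beta> u * ps u x)"
    using main_inv[OF assms] by blast
  define \<alpha> where "\<alpha> i = complex_of_real (\<beta> i)" for i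
  have A1: "\<forall>m\<in>{1..l-1}. \<forall>i\<in>Iw m. \<alpha> i \<in> mzv_span (l - 1 - m)"
  proof (intro ballI)
    fix m i assume m: "m \<in> {1..l-1}" and i: "i \<in> Iw m"
    have "i \<in> W (l - 1)" using m i unfolding W_Iw by blast
    moreover have "length i = m" using i by (simp add: Iw_def)
    ultimately show "\<alpha> i \<in> mzv_span (l - 1 - m)"
      using b1 unfolding \<alpha>_def by (auto intro: Sp_mzv_span)
  qed
  have A2: "complex_of_real (g l x) =
         (if even l then 1 / complex_of_real x else 1) *
         (\<Sum>m=1..l-1. \<Sum>i\<in>Iw m. \<alpha> i * complex_of_real (hyperlog (map real i) x))"
    if x: "0 < x" "x < 1" for x
  proof -
    have "(\<Sum>m=1..l-1. \<Sum>i\<in>Iw m. \<alpha> i * complex_of_real (hyperlog (map real i) x)) =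
          (\<Sum>i\<in>W (l - 1). \<alpha> i * complex_of_real (hyperlog (map real i) x))"
      by (rule sum_Iw)
    also have "\<dots> = (\<Sum>i\<in>W (l - 1). complex_of_real (\<beta> i * ps i x))"
    proof (intro sum.cong refl)
      fix i assume "i \<in> W (l - 1)"
      then have "wok i" using W_wok by blast
      then have "hyperlog (map real i) x = ps i x" using x by (intro hyperlog_ps) auto
      then show "\<alpha> i * complex_of_real (hyperlog (map real i) x) = complex_of_real (\<beta> i * ps i x)"
        unfolding \<alpha>_def by simp
    qed
    also have "\<dots> = complex_of_real (\<Sum>i\<in>W (l - 1). \<beta> i * ps i x)" by simp
    finally show ?thesis using b2 x by simp
  qed
  show ?thesis using A1 A2 by blast
qed

end
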